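(* For every ProbeTop-$k$ instance $I$ with $k$ positions, the policy $\mathsf{ALG}_{\mathtt{ptk}}$ defined below (which is non-adaptive and committed) satisfies $$R_{\mathsf{ALG}_{\mathtt{ptk}}}(I)\ \ge\ \Big(1-\frac{e^{-k}k^k}{k!}\Big)\mathrm{LP}_{\mathtt{ptk}}(I)\ \ge\ \Big(1-\frac{e^{-k}k^k}{k!}\Big)\mathsf{OPT}_{\mathtt{ptk}}(I).$$ Policy $\mathsf{ALG}_{\mathtt{ptk}}$: take an optimal basic feasible solution $(x,y)$ of $\mathrm{LP}_{\mathtt{ptk}}(I)$. For each $i$ set $p_i=\sum_j x_{ij}/y_i$ and $v_i=\sum_j r_jx_{ij}/\sum_j x_{ij}$ (both $0$ if the denominator is $0$). Generate random $Y\in\{0,1\}^n$: $Y_i=y_i$ whenever $y_i\in\{0,1\}$; if exactly one $y_{i'}$ is fractional, $Y_{i'}=1$ with probability $y_{i'}$ and $0$ otherwise; if exactly two $y_{i_1},y_{i_2}$ are fractional (they then sum to 1), set $(Y_{i_1},Y_{i_2})=(1,0)$ with probability $y_{i_1}$ and $(0,1)$ otherwise. Interview the candidates with $Y_i=1$ in non-increasing order of $v_i$; when candidate $i$ is interviewed and $V_i=r_j$ is observed, if fewer than $k$ candidates have been hired, irrevocably hire $i$ with probability $x_{ij}/(y_iq_{ij})$ (independently of everything else), and otherwise reject $i$ permanently.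
   Context: ProbeTop-$k$ problem: integers $1\le k\le T\le n$; candidates $i\in[n]$ have independent nonnegative values $V_i\sim F_i$ supported on a finite set $\{r_1,\dots,r_J\}$, $q_{ij}=\mathbb{P}(V_i=r_j)$ known. A policy interviews at most $T$ candidates sequentially (interviewing $i$ reveals $V_i$) and hires at most $k$ interviewed candidates, receiving the sum of their values. A policy is non-adaptive if the interview order is fixed before any value is observed; it is committed if after each interview it must irrevocably decide whether to hire that candidate. $R_\pi(I)$ is the expected reward of policy $\pi$, $\mathsf{OPT}_{\mathtt{ptk}}(I)$ the supremum over all (adaptive, non-committed) policies. $\mathrm{LP}_{\mathtt{ptk}}(I)$: maximize $\sum_{i,j} r_jx_{ij}$ s.t. $x_{ij}\le y_iq_{ij}$; $\sum_i y_i\le T$; $\sum_{i,j}x_{ij}\le k$; $x_{ij}\ge0$; $0\le y_i\le1$. *)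

theory Defs
  imports "HOL-Probability.Probability"
begin

text \<open>A ProbeTop-k instance is given by parameters n T k J, values r j (j < J)
  and probabilities q i j = P(V_i = r j) (i < n, j < J).\<close>

definition valid_instance ::
  "nat \<Rightarrow> nat \<Rightarrow> nat \<Rightarrow> nat \<Rightarrow> (nat \<Rightarrow> real) \<Rightarrow> (nat \<Rightarrow> nat \<Rightarrow> real) \<Rightarrow> bool" where
  "valid_instance n T k J r q \<longleftrightarrow>
     1 \<le> k \<and> k \<le> T \<and> T \<le> n \<and> inj_on r {..<J} \<and> (\<forall>j<J. 0 \<le> r j) \<and>
     (\<forall>i<n. \<forall>j<J. 0 \<le> q i j) \<and> (\<forall>i<n. (\<Sum>j<J. q i j) = 1)"

datatype action = Interview nat | Stop "nat set"

type_synonym hist = "(nat \<times> real) list"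
type_synonym policy = "hist \<Rightarrow> action pmf"

text \<open>Reward of hiring the set H at the end (non-committed): valid iff H is a set of
  at most k interviewed candidates; invalid choices give reward 0.\<close>
definition stop_value :: "nat \<Rightarrow> hist \<Rightarrow> nat set \<Rightarrow> real" where
  "stop_value k h H = (if H \<subseteq> fst ` set h \<and> card H \<le> k
      then (\<Sum>i\<in>H. the (map_of h i)) else 0)"

text \<open>Expected reward of a (randomised, adaptive) policy from history h with
  fuel f = remaining interview budget. Invalid interview actions give reward 0.\<close>
primrec pol_eval :: "nat \<Rightarrow> nat \<Rightarrow> nat \<Rightarrow> nat \<Rightarrow> nat \<Rightarrow> (nat \<Rightarrow> real) \<Rightarrow>
    (nat \<Rightarrow> nat \<Rightarrow> real) \<Rightarrow> policy \<Rightarrow> hist \<Rightarrow> real" where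
  "pol_eval 0 n T k J r q \<pi> h =
     measure_pmf.expectation (\<pi> h)
       (\<lambda>a. case a of Stop H \<Rightarrow> stop_value k h H | Interview i \<Rightarrow> 0)"
| "pol_eval (Suc f) n T k J r q \<pi> h =
     measure_pmf.expectation (\<pi> h)
       (\<lambda>a. case a of Stop H \<Rightarrow> stop_value k h H
          | Interview i \<Rightarrow>
              (if i < n \<and> i \<notin> fst ` set h \<and> length h < T
               then (\<Sum>j<J. q i j * pol_eval f n T k J r q \<pi> (h @ [(i, r j)]))
               else 0))"

definition policy_reward ::
  "nat \<Rightarrow> nat \<Rightarrow> nat \<Rightarrow> nat \<Rightarrow> (nat \<Rightarrow> real) \<Rightarrow> (nat \<Rightarrow> nat \<Rightarrow> real) \<Rightarrow> policy \<Rightarrow> real" where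
  "policy_reward n T k J r q \<pi> = pol_eval T n T k J r q \<pi> []"

definition opt_ptk ::
  "nat \<Rightarrow> nat \<Rightarrow> nat \<Rightarrow> nat \<Rightarrow> (nat \<Rightarrow> real) \<Rightarrow> (nat \<Rightarrow> nat \<Rightarrow> real) \<Rightarrow> real" where
  "opt_ptk n T k J r q = (SUP \<pi>. policy_reward n T k J r q \<pi>)"

definition lp_feasible ::
  "nat \<Rightarrow> nat \<Rightarrow> nat \<Rightarrow> nat \<Rightarrow> (nat \<Rightarrow> nat \<Rightarrow> real) \<Rightarrow> (nat \<Rightarrow> nat \<Rightarrow> real) \<Rightarrow> (nat \<Rightarrow> real) \<Rightarrow> bool" where
  "lp_feasible n T k J q x y \<longleftrightarrow>
     (\<forall>i<n. 0 \<le> y i \<and> y i \<le> 1 \<and> (\<forall>j<J. 0 \<le> x i j \<and> x i j \<le> y i * q i j)) \<and>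
     (\<Sum>i<n. y i) \<le> real T \<and> (\<Sum>i<n. \<Sum>j<J. x i j) \<le> real k \<and>
     (\<forall>i j. n \<le> i \<or> J \<le> j \<longrightarrow> x i j = 0) \<and> (\<forall>i. n \<le> i \<longrightarrow> y i = 0)"

definition lp_obj :: "nat \<Rightarrow> nat \<Rightarrow> (nat \<Rightarrow> real) \<Rightarrow> (nat \<Rightarrow> nat \<Rightarrow> real) \<Rightarrow> real" where
  "lp_obj n J r x = (\<Sum>i<n. \<Sum>j<J. r j * x i j)"

definition lp_value ::
  "nat \<Rightarrow> nat \<Rightarrow> nat \<Rightarrow> nat \<Rightarrow> (nat \<Rightarrow> real) \<Rightarrow> (nat \<Rightarrow> nat \<Rightarrow> real) \<Rightarrow> real" where
  "lp_value n T k J r q = Sup {lp_obj n J r x | x y. lp_feasible n T k J q x y}"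

definition lp_optimal ::
  "nat \<Rightarrow> nat \<Rightarrow> nat \<Rightarrow> nat \<Rightarrow> (nat \<Rightarrow> real) \<Rightarrow> (nat \<Rightarrow> nat \<Rightarrow> real) \<Rightarrow>
   (nat \<Rightarrow> nat \<Rightarrow> real) \<Rightarrow> (nat \<Rightarrow> real) \<Rightarrow> bool" where
  "lp_optimal n T k J r q x y \<longleftrightarrow>
     lp_feasible n T k J q x y \<and>
     (\<forall>x' y'. lp_feasible n T k J q x' y' \<longrightarrow> lp_obj n J r x' \<le> lp_obj n J r x)"

definition lp_bfs ::
  "nat \<Rightarrow> nat \<Rightarrow> nat \<Rightarrow> nat \<Rightarrow> (nat \<Rightarrow> nat \<Rightarrow> real) \<Rightarrow> (nat \<Rightarrow> nat \<Rightarrow> real) \<Rightarrow> (nat \<Rightarrow> real) \<Rightarrow> bool" where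
  "lp_bfs n T k J q x y \<longleftrightarrow>
     lp_feasible n T k J q x y \<and>
     \<not> (\<exists>x1 y1 x2 y2. lp_feasible n T k J q x1 y1 \<and> lp_feasible n T k J q x2 y2 \<and>
          (x1, y1) \<noteq> (x2, y2) \<and>
          x = (\<lambda>i j. (x1 i j + x2 i j) / 2) \<and> y = (\<lambda>i. (y1 i + y2 i) / 2))"

definition alg_v :: "nat \<Rightarrow> (nat \<Rightarrow> real) \<Rightarrow> (nat \<Rightarrow> nat \<Rightarrow> real) \<Rightarrow> nat \<Rightarrow> real" where
  "alg_v J r x i = (let s = (\<Sum>j<J. x i j) in if s = 0 then 0 else (\<Sum>j<J. r j * x i j) / s)"

definition alg_p :: "nat \<Rightarrow> (nat \<Rightarrow> nat \<Rightarrow> real) \<Rightarrow> (nat \<Rightarrow> real) \<Rightarrow> nat \<Rightarrow> real" where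
  "alg_p J x y i = (if y i = 0 then 0 else (\<Sum>j<J. x i j) / y i)"

text \<open>Distribution of the set {i. Y_i = 1}.\<close>
definition alg_Y :: "nat \<Rightarrow> (nat \<Rightarrow> real) \<Rightarrow> nat set pmf" where
  "alg_Y n y = (let Fr = {i. i < n \<and> 0 < y i \<and> y i < 1}; B = {i. i < n \<and> y i = 1} in
     if card Fr = 0 then return_pmf B
     else if card Fr = 1 then
       map_pmf (\<lambda>b. if b then insert (Min Fr) B else B) (bernoulli_pmf (y (Min Fr)))
     else if card Fr = 2 then
       map_pmf (\<lambda>b. if b then insert (Min Fr) B else insert (Max Fr) B) (bernoulli_pmf (y (Min Fr)))
     else return_pmf {})"

definition alg_hire_prob ::
  "(nat \<Rightarrow> nat \<Rightarrow> real) \<Rightarrow> (nat \<Rightarrow> nat \<Rightarrow> real) \<Rightarrow> (nat \<Rightarrow> real) \<Rightarrow> nat \<Rightarrow> nat \<Rightarrow> real" where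
  "alg_hire_prob q x y i j = (if y i * q i j = 0 then 0 else x i j / (y i * q i j))"

text \<open>Expected reward collected when interviewing the list L in order, h hires made so far.\<close>
primrec alg_proc :: "nat \<Rightarrow> nat \<Rightarrow> (nat \<Rightarrow> real) \<Rightarrow> (nat \<Rightarrow> nat \<Rightarrow> real) \<Rightarrow>
    (nat \<Rightarrow> nat \<Rightarrow> real) \<Rightarrow> (nat \<Rightarrow> real) \<Rightarrow> nat list \<Rightarrow> nat \<Rightarrow> real" where
  "alg_proc k J r q x y [] h = 0"
| "alg_proc k J r q x y (i # L) h =
     (if h < k then
        (\<Sum>j<J. q i j * (alg_hire_prob q x y i j * (r j + alg_proc k J r q x y L (Suc h))
                        + (1 - alg_hire_prob q x y i j) * alg_proc k J r q x y L h))
      else alg_proc k J r q x y L h)"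

text \<open>An admissible interview order: for each selected set S, a listing of S in
  non-increasing order of v (ties broken arbitrarily).\<close>
definition alg_order_ok :: "nat \<Rightarrow> (nat \<Rightarrow> real) \<Rightarrow> (nat set \<Rightarrow> nat list) \<Rightarrow> bool" where
  "alg_order_ok n v \<sigma> \<longleftrightarrow>
     (\<forall>S. S \<subseteq> {..<n} \<longrightarrow> set (\<sigma> S) = S \<and> distinct (\<sigma> S) \<and> sorted_wrt (\<lambda>a b. v b \<le> v a) (\<sigma> S))"

definition alg_reward ::
  "nat \<Rightarrow> nat \<Rightarrow> nat \<Rightarrow> (nat \<Rightarrow> real) \<Rightarrow> (nat \<Rightarrow> nat \<Rightarrow> real) \<Rightarrow>
   (nat \<Rightarrow> nat \<Rightarrow> real) \<Rightarrow> (nat \<Rightarrow> real) \<Rightarrow> (nat set \<Rightarrow> nat list) \<Rightarrow> real" where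
  "alg_reward n k J r q x y \<sigma> =
     measure_pmf.expectation (alg_Y n y) (\<lambda>S. alg_proc k J r q x y (\<sigma> S) 0)"

end

theory Submission
  imports Defs
begin

definition FF :: "nat \<Rightarrow> real \<Rightarrow> real" where
  "FF m u = (\<Sum>j<m. exp (- u) * u ^ j / fact j)"

definition PH :: "nat \<Rightarrow> real \<Rightarrow> real" where
  "PH m u = (\<Sum>l<m. 1 - FF (Suc l) u)"

lemma FF_alt: "FF m u = exp (- u) * (\<Sum>j<m. u ^ j / fact j)"
  by (simp add: FF_def sum_distrib_left)

lemma FF_deriv: "DERIV (FF (Suc l)) u :> - (exp (- u) * u ^ l / fact l)"
proof (induction l)
  case 0
  have "DERIV (\<lambda>u. exp (- u)) u :> exp (- u) * (- 1)"
    by (auto intro!: derivative_eq_intros)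
  then show ?case by (simp add: FF_def)
next
  case (Suc l)
  have e: "FF (Suc (Suc l)) = (\<lambda>u. FF (Suc l) u + exp (- u) * u ^ Suc l / fact (Suc l))"
    by (auto simp: FF_def)
  have d2: "DERIV (\<lambda>u. exp (- u) * u ^ Suc l / fact (Suc l)) u :>
     (exp (- u) * (- 1) * u ^ Suc l + exp (- u) * (real (Suc l) * u ^ l)) / fact (Suc l)"
    by (rule derivative_eq_intros refl | simp)+
  have "DERIV (FF (Suc (Suc l))) u :> - (exp (- u) * u ^ l / fact l) +
     (exp (- u) * (- 1) * u ^ Suc l + exp (- u) * (real (Suc l) * u ^ l)) / fact (Suc l)"
    unfolding e by (intro DERIV_add Suc d2)
  moreover have "- (exp (- u) * u ^ l / fact l) +
     (exp (- u) * (- 1) * u ^ Suc l + exp (- u) * (real (Suc l) * u ^ l)) / fact (Suc l)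
     = - (exp (- u) * u ^ Suc l / fact (Suc l))"
  proof -
    have a: "exp (- u) * (real (Suc l) * u ^ l) / fact (Suc l) = exp (- u) * u ^ l / fact l"
      by (simp add: fact_Suc)
    have "(exp (- u) * (- 1) * u ^ Suc l + exp (- u) * (real (Suc l) * u ^ l)) / fact (Suc l)
       = - (exp (- u) * u ^ Suc l / fact (Suc l)) + exp (- u) * (real (Suc l) * u ^ l) / fact (Suc l)"
      by (subst add_divide_distrib) simp
    then show ?thesis using a by simp
  qed
  ultimately show ?case by simp
qed

lemma PH_deriv: "DERIV (PH m) u :> FF m u"
proof (induction m)
  case 0
  then show ?case by (simp add: PH_def FF_def)
next
  case (Suc m)
  have e: "PH (Suc m) = (\<lambda>u. PH m u + (1 - FF (Suc m) u))"
    by (auto simp: PH_def)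
  have "DERIV (PH (Suc m)) u :> FF m u + (0 - - (exp (- u) * u ^ m / fact m))"
    unfolding e by (intro DERIV_add Suc DERIV_diff DERIV_const FF_deriv)
  then show ?case by (simp add: FF_def)
qed

lemma FF_antimono:
  assumes "0 \<le> a" "a \<le> b" shows "FF m b \<le> FF m a"
proof (cases m)
  case 0 then show ?thesis by (simp add: FF_def)
next
  case (Suc l)
  show ?thesis unfolding Suc
  proof (rule DERIV_nonpos_imp_nonincreasing[OF assms(2)])
    fix u assume "a \<le> u" "u \<le> b"
    then have "0 \<le> u" using assms by simp
    then show "\<exists>y. DERIV (FF (Suc l)) u :> y \<and> y \<le> 0"
      by (intro exI[of _ "- (exp (- u) * u ^ l / fact l)"]) (auto intro: FF_deriv)
  qed
qed

lemma PH_tangent: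
  assumes "0 \<le> a" "0 \<le> b" shows "PH m b \<le> PH m a + (b - a) * FF m a"
proof (cases a b rule: linorder_cases)
  case less
  obtain z where z: "a < z" "z < b" "PH m b - PH m a = (b - a) * FF m z"
    using MVT2[OF less, of "PH m" "FF m"] PH_deriv by blast
  have "FF m z \<le> FF m a" using FF_antimono z assms by simp
  then have "(b - a) * FF m z \<le> (b - a) * FF m a" using less by (simp add: mult_left_mono)
  then show ?thesis using z by linarith
next
  case equal then show ?thesis by simp
next
  case greater
  obtain z where z: "b < z" "z < a" "PH m a - PH m b = (a - b) * FF m z"
    using MVT2[OF greater, of "PH m" "FF m"] PH_deriv by blast
  have "FF m a \<le> FF m z" using FF_antimono z assms by simp
  then have "(a - b) * FF m a \<le> (a - b) * FF m z" using greater by (simp add: mult_left_mono)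
  then show ?thesis using z by (simp add: algebra_simps)
qed

lemma FF_0: "FF (Suc l) 0 = 1"
  by (induction l) (simp_all add: FF_def)

lemma PH_0: "PH m 0 = 0"
  by (simp add: PH_def FF_0)

lemma PH_Suc: "PH (Suc m) u = PH m u + 1 - FF (Suc m) u"
  by (simp add: PH_def)

lemma sum_FF: "(\<Sum>l<m. FF (Suc l) u) = exp (- u) * (\<Sum>j<m. (real m - real j) * u ^ j / fact j)"
proof (induction m)
  case 0 then show ?case by simp
next
  case (Suc m)
  have "(\<Sum>l<Suc m. FF (Suc l) u) = (\<Sum>l<m. FF (Suc l) u) + FF (Suc m) u" by simp
  also have "\<dots> = exp (- u) * (\<Sum>j<m. (real m - real j) * u ^ j / fact j)
      + exp (- u) * (\<Sum>j<Suc m. u ^ j / fact j)"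
    using Suc.IH by (simp add: FF_alt[of "Suc m"] distrib_left)
  also have "\<dots> = exp (- u) * (\<Sum>j<Suc m. (real (Suc m) - real j) * u ^ j / fact j)"
  proof -
    have "(\<Sum>j<Suc m. (real (Suc m) - real j) * u ^ j / fact j)
       = (\<Sum>j<Suc m. (real m - real j) * u ^ j / fact j + u ^ j / fact j)"
      by (intro sum.cong) (auto simp: field_simps)
    also have "\<dots> = (\<Sum>j<m. (real m - real j) * u ^ j / fact j) + (\<Sum>j<Suc m. u ^ j / fact j)"
      by (simp add: sum.distrib)
    finally show ?thesis by (simp add: algebra_simps)
  qed
  finally show ?case .
qed

lemma telesc: "(\<Sum>j<m. (K - real j) * K ^ j / fact j) = real m * K ^ m / fact m"
proof (induction m)
  case 0 then show ?case by simp
next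
  case (Suc m)
  have "(\<Sum>j<Suc m. (K - real j) * K ^ j / fact j) = real m * K ^ m / fact m + (K - real m) * K ^ m / fact m"
    using Suc by simp
  also have "\<dots> = K * K ^ m / fact m" by (simp add: add_divide_distrib[symmetric] algebra_simps)
  also have "\<dots> = real (Suc m) * K ^ Suc m / fact (Suc m)" by (simp add: fact_Suc)
  finally show ?case .
qed

lemma PH_kk: "PH k (real k) = real k * (1 - exp (- real k) * real k ^ k / fact k)"
proof -
  have "PH k (real k) = real k - (\<Sum>l<k. FF (Suc l) (real k))"
    by (simp add: PH_def sum_subtractf)
  also have "\<dots> = real k - exp (- real k) * (real k * real k ^ k / fact k)"
    by (simp add: sum_FF telesc)
  finally show ?thesis by (simp add: algebra_simps)
qed

lemma PH_ge:
  assumes "0 < k" "0 \<le> u" "u \<le> real k"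
  shows "u * (1 - exp (- real k) * real k ^ k / fact k) \<le> PH k u"
proof -
  have t1: "PH k (real k) \<le> PH k u + (real k - u) * FF k u" using PH_tangent assms by simp
  have t2: "PH k 0 \<le> PH k u + (0 - u) * FF k u" using PH_tangent[of u 0 k] assms by simp
  have "u * PH k (real k) + (real k - u) * PH k 0 \<le> u * (PH k u + (real k - u) * FF k u)
       + (real k - u) * (PH k u + (0 - u) * FF k u)"
    using assms t1 t2 by (intro add_mono mult_left_mono) auto
  then have "u * PH k (real k) \<le> real k * PH k u" by (simp add: PH_0 algebra_simps)
  then have "real k * (u * (1 - exp (- real k) * real k ^ k / fact k)) \<le> real k * PH k u"
    by (simp add: PH_kk algebra_simps)
  then show ?thesis using assms by simp
qed

lemma ck_nonneg: "0 \<le> 1 - exp (- real k) * real k ^ k / fact k"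
proof -
  have "FF (Suc k) (real k) \<le> 1" using FF_antimono[of 0 "real k" "Suc k"] FF_0 by simp
  moreover have "0 \<le> FF k (real k)" by (simp add: FF_def sum_nonneg)
  moreover have "FF (Suc k) (real k) = FF k (real k) + exp (- real k) * real k ^ k / fact k"
    by (simp add: FF_def)
  ultimately have "exp (- real k) * real k ^ k / fact k \<le> 1" by linarith
  then show ?thesis by simp
qed


primrec CC :: "nat \<Rightarrow> real list \<Rightarrow> nat \<Rightarrow> real" where
  "CC k [] h = 0"
| "CC k (u # L) h = (if h < k then u * (1 + CC k L (Suc h)) + (1 - u) * CC k L h else CC k L h)"

lemma CC_PH:
  assumes "\<forall>u\<in>set L. 0 \<le> u \<and> u \<le> 1"
  shows "PH (k - h) (sum_list L) \<le> CC k L h"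
  using assms
proof (induction L arbitrary: h)
  case Nil then show ?case by (simp add: PH_0)
next
  case (Cons u L)
  have u: "0 \<le> u" "u \<le> 1" using Cons.prems by auto
  have s0: "0 \<le> sum_list L" using Cons.prems by (intro sum_list_nonneg) auto
  show ?case
  proof (cases "h < k")
    case True
    define m where "m = k - Suc h"
    have m: "k - h = Suc m" "k - Suc h = m" using True by (auto simp: m_def)
    have IH1: "PH m (sum_list L) \<le> CC k L (Suc h)" using Cons.IH[of "Suc h"] Cons.prems m by simp
    have IH0: "PH (Suc m) (sum_list L) \<le> CC k L h" using Cons.IH[of h] Cons.prems m by simp
    have "PH (Suc m) (u + sum_list L) \<le> PH (Suc m) (sum_list L) + u * FF (Suc m) (sum_list L)"
      using PH_tangent[of "sum_list L" "u + sum_list L" "Suc m"] s0 u by simp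
    also have "\<dots> = u * (1 + PH m (sum_list L)) + (1 - u) * PH (Suc m) (sum_list L)"
      by (simp add: PH_Suc algebra_simps)
    also have "\<dots> \<le> u * (1 + CC k L (Suc h)) + (1 - u) * CC k L h"
      using IH0 IH1 u by (intro add_mono mult_left_mono) auto
    finally show ?thesis using True m by simp
  next
    case False
    then have "k - h = 0" by simp
    then have "0 \<le> CC k L h" using Cons.IH[of h] Cons.prems by (simp add: PH_def)
    then show ?thesis using False by (simp add: PH_def)
  qed
qed

lemma CC_main:
  assumes "\<forall>u\<in>set L. 0 \<le> u \<and> u \<le> 1" "sum_list L \<le> real k" "0 < k"
  shows "(1 - exp (- real k) * real k ^ k / fact k) * sum_list L \<le> CC k L 0"
proof -
  have s0: "0 \<le> sum_list L" using assms by (intro sum_list_nonneg) auto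
  show ?thesis using PH_ge[OF assms(3) s0 assms(2)] CC_PH[OF assms(1), of k 0]
    by (simp add: mult.commute)
qed

definition DD :: "nat \<Rightarrow> real list \<Rightarrow> nat \<Rightarrow> real" where
  "DD k L h = (if h < k then 1 + CC k L (Suc h) - CC k L h else 0)"

lemma CC_cons: "CC k (u # L) h = CC k L h + u * DD k L h"
  by (simp add: DD_def algebra_simps)

lemma CC_swap: "CC k (a # b # L) h = CC k (b # a # L) h"
  by (simp add: algebra_simps)

lemma CC_remove1: "a \<in> set L \<Longrightarrow> CC k L h = CC k (a # remove1 a L) h"
proof (induction L arbitrary: h)
  case Nil then show ?case by simp
next
  case (Cons b L)
  show ?case
  proof (cases "a = b")
    case True then show ?thesis by simp
  next
    case False
    then have a: "a \<in> set L" using Cons by simp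
    have "CC k (b # L) h = CC k (b # a # remove1 a L) h"
      using Cons.IH[OF a] by simp
    also have "\<dots> = CC k (a # b # remove1 a L) h" by (rule CC_swap)
    finally show ?thesis using False by simp
  qed
qed

lemma CC_mset: "mset L = mset L' \<Longrightarrow> CC k L h = CC k L' h"
proof (induction L arbitrary: L' h)
  case Nil then show ?case by simp
next
  case (Cons a L)
  have a: "a \<in> set L'" using Cons.prems by (metis list.set_intros(1) set_mset_mset)
  have m: "mset L = mset (remove1 a L')" by (simp add: mset_remove1 Cons.prems[symmetric])
  have "CC k L' h = CC k (a # remove1 a L') h" by (rule CC_remove1[OF a])
  also have "\<dots> = CC k (a # L) h" using Cons.IH[OF m] by simp
  finally show ?case by simp
qed

primrec QQ :: "nat \<Rightarrow> (nat \<Rightarrow> real) \<Rightarrow> (nat \<Rightarrow> real) \<Rightarrow> nat list \<Rightarrow> nat \<Rightarrow> real" where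
  "QQ k p v [] h = 0"
| "QQ k p v (i # L) h = (if h < k then p i * (v i + QQ k p v L (Suc h)) + (1 - p i) * QQ k p v L h
                         else QQ k p v L h)"

lemma QQ_lin: "QQ k p (\<lambda>i. a * v1 i + v2 i) L h = a * QQ k p v1 L h + QQ k p v2 L h"
  by (induction L arbitrary: h) (simp_all add: algebra_simps)

lemma QQ_cong: "\<forall>i\<in>set L. v1 i = v2 i \<Longrightarrow> QQ k p v1 L h = QQ k p v2 L h"
  by (induction L arbitrary: h) simp_all

lemma QQ_zero: "\<forall>i\<in>set L. v i = 0 \<Longrightarrow> QQ k p v L h = 0"
  by (induction L arbitrary: h) simp_all

lemma QQ_ind:
  fixes v :: "nat \<Rightarrow> real"
  assumes "sorted_wrt (\<lambda>a b. v b \<le> v a) L"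
  shows "QQ k p (\<lambda>i. if t \<le> v i then 1 else 0) L h = CC k (map p (filter (\<lambda>i. t \<le> v i) L)) h"
  using assms
proof (induction L arbitrary: h)
  case Nil then show ?case by simp
next
  case (Cons i L)
  show ?case
  proof (cases "t \<le> v i")
    case True then show ?thesis using Cons by simp
  next
    case False
    have vi: "\<forall>j\<in>set L. v j \<le> v i" using Cons.prems by simp
    have "\<forall>j\<in>set L. \<not> t \<le> v j"
    proof
      fix j assume "j \<in> set L"
      with vi have "v j \<le> v i" by blast
      with False show "\<not> t \<le> v j" by linarith
    qed
    then have "QQ k p (\<lambda>i. if t \<le> v i then 1 else 0) L h' = 0" for h'
      by (intro QQ_zero) auto
    moreover have "filter (\<lambda>i. t \<le> v i) L = []" using \<open>\<forall>j\<in>set L. \<not> t \<le> v j\<close>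
      by (simp add: filter_empty_conv)
    ultimately show ?thesis using False by simp
  qed
qed


lemma sum_list_split2:
  fixes Ss :: "(real \<times> nat set) list" and f g :: "nat set \<Rightarrow> real" and t :: real
  shows
  "(\<Sum>(w, S)\<leftarrow>Ss. w * (t * f S + g S)) = t * (\<Sum>(w, S)\<leftarrow>Ss. w * f S) + (\<Sum>(w, S)\<leftarrow>Ss. w * g S)"
  by (induction Ss) (auto simp: algebra_simps)

lemma TI:
  fixes Ss :: "(real \<times> nat set) list" and a :: "nat \<Rightarrow> real" and c :: real
  assumes Ssub: "\<forall>(w,S)\<in>set Ss. S \<subseteq> {..<n} \<and> set (\<sigma> S) = S"
    and IND: "\<forall>P. c * (\<Sum>i<n. if P i then a i else 0) \<le> (\<Sum>(w,S)\<leftarrow>Ss. w * CC k (map p (filter P (\<sigma> S))) 0)"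
  shows "\<forall>v. (\<forall>i<n. 0 \<le> v i) \<longrightarrow> (\<forall>(w,S)\<in>set Ss. sorted_wrt (\<lambda>a b. v b \<le> v a) (\<sigma> S)) \<longrightarrow>
      c * (\<Sum>i<n. a i * v i) \<le> (\<Sum>(w,S)\<leftarrow>Ss. w * QQ k p v (\<sigma> S) 0)"
proof -
  have main: "\<And>v. card (v ` {..<n} - {0}) = N \<Longrightarrow> (\<forall>i<n. 0 \<le> v i) \<Longrightarrow>
      (\<forall>(w,S)\<in>set Ss. sorted_wrt (\<lambda>a b. v b \<le> v a) (\<sigma> S)) \<Longrightarrow>
      c * (\<Sum>i<n. a i * v i) \<le> (\<Sum>(w,S)\<leftarrow>Ss. w * QQ k p v (\<sigma> S) 0)" for N
  proof (induction N rule: less_induct)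
    case (less N v)
    define Vp where "Vp = v ` {..<n} - {0}"
    have finVp: "finite Vp" unfolding Vp_def by simp
    show ?case
    proof (cases "Vp = {}")
      case True
      then have z: "\<forall>i<n. v i = 0" unfolding Vp_def by auto
      have "\<forall>(w,S)\<in>set Ss. QQ k p v (\<sigma> S) 0 = 0"
      proof (intro ballI, clarify)
        fix w S assume wS: "(w, S) \<in> set Ss"
        have sub: "set (\<sigma> S) \<subseteq> {..<n}"
        proof -
          have "S \<subseteq> {..<n} \<and> set (\<sigma> S) = S" using Ssub wS by fastforce
          then show ?thesis by simp
        qed
        show "QQ k p v (\<sigma> S) 0 = 0" using sub z by (intro QQ_zero) auto
      qed
      then have "(\<Sum>(w,S)\<leftarrow>Ss. w * QQ k p v (\<sigma> S) 0) = 0"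
        by (induction Ss) auto
      moreover have "(\<Sum>i<n. a i * v i) = 0" using z by simp
      ultimately show ?thesis by simp
    next
      case False
      define t where "t = Min Vp"
      have tVp: "t \<in> Vp" unfolding t_def using False finVp by simp
      have tpos: "0 < t"
      proof -
        obtain i where i: "i < n" "t = v i" "t \<noteq> 0" using tVp unfolding Vp_def by auto
        then show ?thesis using less.prems(2) by force
      qed
      have tle: "\<And>i. i < n \<Longrightarrow> v i \<noteq> 0 \<Longrightarrow> t \<le> v i"
        unfolding t_def using finVp by (intro Min_le) (auto simp: Vp_def)
      define P where "P = (\<lambda>i. t \<le> v i)"
      define v' where "v' = (\<lambda>i. if t \<le> v i then v i - t else v i)"
      have dec: "\<And>i. i < n \<Longrightarrow> v i = t * (if P i then 1 else 0) + v' i"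
      proof -
        fix i assume i: "i < n"
        show "v i = t * (if P i then 1 else 0) + v' i"
        proof (cases "t \<le> v i")
          case True then show ?thesis by (simp add: P_def v'_def)
        next
          case False
          have "v i = 0"
          proof (rule ccontr)
            assume "v i \<noteq> 0"
            then have "t \<le> v i" by (rule tle[OF i])
            with False show False by simp
          qed
          then show ?thesis using False by (simp add: P_def v'_def)
        qed
      qed
      have v'0: "\<forall>i<n. 0 \<le> v' i" using less.prems(2) by (auto simp: v'_def)
      have srt': "\<forall>(w,S)\<in>set Ss. sorted_wrt (\<lambda>a b. v' b \<le> v' a) (\<sigma> S)"
      proof (intro ballI, clarify)
        fix w S assume wS: "(w, S) \<in> set Ss"
        have sub: "set (\<sigma> S) \<subseteq> {..<n}"
        proof -
          have "S \<subseteq> {..<n} \<and> set (\<sigma> S) = S" using Ssub wS by fastforce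
          then show ?thesis by simp
        qed
        show "sorted_wrt (\<lambda>a b. v' b \<le> v' a) (\<sigma> S)"
        proof (rule sorted_wrt_mono_rel[of _ "\<lambda>a b. v b \<le> v a"])
          fix x y assume xy: "x \<in> set (\<sigma> S)" "y \<in> set (\<sigma> S)" "v y \<le> v x"
          have "x < n" "y < n" using xy sub by auto
          then have "0 \<le> v x" "0 \<le> v y" "v x \<noteq> 0 \<longrightarrow> t \<le> v x" "v y \<noteq> 0 \<longrightarrow> t \<le> v y"
            using less.prems(2) tle by auto
          then show "v' y \<le> v' x" using xy(3) tpos
            unfolding v'_def by auto
        next
          show "sorted_wrt (\<lambda>a b. v b \<le> v a) (\<sigma> S)" using less.prems(3) wS by auto
        qed
      qed
      have card': "card (v' ` {..<n} - {0}) < N"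
      proof -
        have "v' ` {..<n} - {0} \<subseteq> (\<lambda>u. u - t) ` (Vp - {t})"
        proof
          fix z assume "z \<in> v' ` {..<n} - {0}"
          then obtain i where i: "i < n" "z = v' i" "v' i \<noteq> 0" by auto
          then have "t \<le> v i"
          proof -
            have "v i \<noteq> 0" using i(3) tpos by (auto simp: v'_def split: if_splits)
            then show ?thesis using tle i(1) by blast
          qed
          then have "z = v i - t" "v i \<noteq> t" using i by (auto simp: v'_def)
          moreover have "v i \<in> Vp" using i \<open>t \<le> v i\<close> tpos unfolding Vp_def by auto
          ultimately show "z \<in> (\<lambda>u. u - t) ` (Vp - {t})" by auto
        qed
        then have "card (v' ` {..<n} - {0}) \<le> card ((\<lambda>u. u - t) ` (Vp - {t}))"
          using finVp by (intro card_mono) auto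
        also have "\<dots> \<le> card (Vp - {t})" by (rule card_image_le) (use finVp in auto)
        also have "\<dots> < card Vp" using finVp tVp by (meson card_Diff1_less)
        finally show ?thesis using less.prems(1) Vp_def by simp
      qed
      have IH: "c * (\<Sum>i<n. a i * v' i) \<le> (\<Sum>(w,S)\<leftarrow>Ss. w * QQ k p v' (\<sigma> S) 0)"
        using less.IH[OF card' refl v'0 srt'] .
      have qdec: "\<forall>(w,S)\<in>set Ss. QQ k p v (\<sigma> S) 0 = t * CC k (map p (filter P (\<sigma> S))) 0 + QQ k p v' (\<sigma> S) 0"
      proof (intro ballI, clarify)
        fix w S assume wS: "(w, S) \<in> set Ss"
        have sub: "set (\<sigma> S) \<subseteq> {..<n}"
        proof -
          have "S \<subseteq> {..<n} \<and> set (\<sigma> S) = S" using Ssub wS by fastforce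
          then show ?thesis by simp
        qed
        have "QQ k p v (\<sigma> S) 0 = QQ k p (\<lambda>i. t * (if P i then 1 else 0) + v' i) (\<sigma> S) 0"
          using sub dec by (intro QQ_cong) auto
        also have "\<dots> = t * QQ k p (\<lambda>i. if P i then 1 else 0) (\<sigma> S) 0 + QQ k p v' (\<sigma> S) 0"
          by (rule QQ_lin)
        also have "QQ k p (\<lambda>i. if P i then 1 else 0) (\<sigma> S) 0 = CC k (map p (filter P (\<sigma> S))) 0"
          unfolding P_def using less.prems(3) wS by (intro QQ_ind) auto
        finally show "QQ k p v (\<sigma> S) 0 = t * CC k (map p (filter P (\<sigma> S))) 0 + QQ k p v' (\<sigma> S) 0" .
      qed
      have "(\<Sum>(w,S)\<leftarrow>Ss. w * QQ k p v (\<sigma> S) 0) =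
            (\<Sum>(w,S)\<leftarrow>Ss. w * (t * CC k (map p (filter P (\<sigma> S))) 0 + QQ k p v' (\<sigma> S) 0))"
        using qdec by (intro arg_cong[where f=sum_list] map_cong) auto
      also have "\<dots> = t * (\<Sum>(w,S)\<leftarrow>Ss. w * CC k (map p (filter P (\<sigma> S))) 0)
                     + (\<Sum>(w,S)\<leftarrow>Ss. w * QQ k p v' (\<sigma> S) 0)"
        by (rule sum_list_split2)
      finally have R: "(\<Sum>(w,S)\<leftarrow>Ss. w * QQ k p v (\<sigma> S) 0) = \<dots>" .
      have "(\<Sum>i<n. a i * v i) = (\<Sum>i<n. t * (if P i then a i else 0) + a i * v' i)"
        using dec by (intro sum.cong) (auto simp: algebra_simps)
      also have "\<dots> = t * (\<Sum>i<n. if P i then a i else 0) + (\<Sum>i<n. a i * v' i)"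
        by (simp add: sum.distrib sum_distrib_left)
      finally have L: "(\<Sum>i<n. a i * v i) = \<dots>" .
      have I1: "c * (\<Sum>i<n. if P i then a i else 0) \<le> (\<Sum>(w,S)\<leftarrow>Ss. w * CC k (map p (filter P (\<sigma> S))) 0)"
        using IND by blast
      have "c * (\<Sum>i<n. a i * v i) = t * (c * (\<Sum>i<n. if P i then a i else 0)) + c * (\<Sum>i<n. a i * v' i)"
        unfolding L by (simp add: algebra_simps)
      also have "\<dots> \<le> t * (\<Sum>(w,S)\<leftarrow>Ss. w * CC k (map p (filter P (\<sigma> S))) 0)
                     + (\<Sum>(w,S)\<leftarrow>Ss. w * QQ k p v' (\<sigma> S) 0)"
        using I1 IH tpos by (intro add_mono mult_left_mono) auto
      finally show ?thesis unfolding R .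
    qed
  qed
  show ?thesis using main by blast
qed


context
  fixes n T J :: nat and r :: "nat \<Rightarrow> real" and q :: "nat \<Rightarrow> nat \<Rightarrow> real" and \<pi> :: policy
begin

primrec GG :: "nat \<Rightarrow> (hist \<Rightarrow> nat set \<Rightarrow> real) \<Rightarrow> (hist \<Rightarrow> real) \<Rightarrow> hist \<Rightarrow> real" where
  "GG 0 \<phi> \<psi> h = measure_pmf.expectation (\<pi> h) (\<lambda>a. case a of Stop H \<Rightarrow> \<phi> h H | Interview i \<Rightarrow> \<psi> h)"
| "GG (Suc f) \<phi> \<psi> h = measure_pmf.expectation (\<pi> h) (\<lambda>a. case a of Stop H \<Rightarrow> \<phi> h H
     | Interview i \<Rightarrow> (if i < n \<and> i \<notin> fst ` set h \<and> length h < T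
                       then (\<Sum>j<J. q i j * GG f \<phi> \<psi> (h @ [(i, r j)])) else \<psi> h))"

definition bdd :: "(hist \<Rightarrow> nat set \<Rightarrow> real) \<Rightarrow> bool" where
  "bdd \<phi> \<longleftrightarrow> (\<forall>h. \<exists>B. \<forall>H. \<bar>\<phi> h H\<bar> \<le> B)"

lemma integ_case:
  fixes M :: "action pmf" and \<phi> :: "nat set \<Rightarrow> real" and F :: "nat \<Rightarrow> real" and Ba Bb :: real
  assumes "\<forall>H. \<bar>\<phi> H\<bar> \<le> Ba" "\<forall>i. \<bar>F i\<bar> \<le> Bb"
  shows "integrable (measure_pmf M) (\<lambda>a. case a of Stop H \<Rightarrow> \<phi> H | Interview i \<Rightarrow> F i)"
proof (rule measure_pmf.integrable_const_bound[where B="Ba + Bb"])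
  have "Ba \<ge> 0" "Bb \<ge> 0" using assms by (meson abs_ge_zero order_trans)+
  then show "AE x in measure_pmf M. norm (case x of Stop H \<Rightarrow> \<phi> H | Interview i \<Rightarrow> F i) \<le> Ba + Bb"
    using assms by (auto split: action.splits intro: add_increasing2 add_increasing)
qed simp

lemma F_bound:
  "\<forall>i. \<bar>(if i < n \<and> P i then G i else (c::real))\<bar> \<le> (\<Sum>i<n. \<bar>G i\<bar>) + \<bar>c\<bar>"
proof
  fix i
  have "\<bar>G i\<bar> \<le> (\<Sum>i<n. \<bar>G i\<bar>)" if "i < n" using that by (intro member_le_sum) auto
  moreover have "0 \<le> (\<Sum>i<n. \<bar>G i\<bar>)" by (simp add: sum_nonneg)
  ultimately show "\<bar>(if i < n \<and> P i then G i else c)\<bar> \<le> (\<Sum>i<n. \<bar>G i\<bar>) + \<bar>c\<bar>" by auto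
qed

lemma integ_GG0:
  assumes "bdd \<phi>"
  shows "integrable (measure_pmf M) (\<lambda>a. case a of Stop H \<Rightarrow> \<phi> h H | Interview i \<Rightarrow> c)"
proof -
  obtain B where "\<forall>H. \<bar>\<phi> h H\<bar> \<le> B" using assms unfolding bdd_def by blast
  then show ?thesis by (rule integ_case[where Bb="\<bar>c\<bar>"]) auto
qed

lemma integ_GGS:
  assumes "bdd \<phi>"
  shows "integrable (measure_pmf M) (\<lambda>a. case a of Stop H \<Rightarrow> \<phi> h H
     | Interview i \<Rightarrow> (if i < n \<and> P i then G i else c))"
proof -
  obtain B where "\<forall>H. \<bar>\<phi> h H\<bar> \<le> B" using assms unfolding bdd_def by blast
  then show ?thesis by (rule integ_case[OF _ F_bound])
qed


lemma GG_mono: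
  assumes qnn: "\<forall>i<n. \<forall>j<J. 0 \<le> q i j"
    and inv: "\<And>h i j. Inv h \<Longrightarrow> i < n \<Longrightarrow> i \<notin> fst ` set h \<Longrightarrow> length h < T \<Longrightarrow> j < J \<Longrightarrow> Inv (h @ [(i, r j)])"
    and le1: "\<And>h H. Inv h \<Longrightarrow> \<phi>1 h H \<le> \<phi>2 h H" and le2: "\<And>h. Inv h \<Longrightarrow> \<psi>1 h \<le> \<psi>2 h"
    and b1: "bdd \<phi>1" and b2: "bdd \<phi>2"
  shows "Inv h \<Longrightarrow> GG f \<phi>1 \<psi>1 h \<le> GG f \<phi>2 \<psi>2 h"
proof (induction f arbitrary: h)
  case 0
  show ?case unfolding GG.simps
    by (rule integral_mono[OF integ_GG0[OF b1] integ_GG0[OF b2]])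
       (use 0 le1 le2 in \<open>auto split: action.splits\<close>)
next
  case (Suc f)
  show ?case unfolding GG.simps
  proof (rule integral_mono[OF integ_GGS[OF b1] integ_GGS[OF b2]])
    fix a show "(case a of Stop H \<Rightarrow> \<phi>1 h H | Interview i \<Rightarrow> if i < n \<and> i \<notin> fst ` set h \<and> length h < T
        then \<Sum>j<J. q i j * GG f \<phi>1 \<psi>1 (h @ [(i, r j)]) else \<psi>1 h)
      \<le> (case a of Stop H \<Rightarrow> \<phi>2 h H | Interview i \<Rightarrow> if i < n \<and> i \<notin> fst ` set h \<and> length h < T
        then \<Sum>j<J. q i j * GG f \<phi>2 \<psi>2 (h @ [(i, r j)]) else \<psi>2 h)"
    proof (cases a)
      case (Interview i)
      show ?thesis
      proof (cases "i < n \<and> i \<notin> fst ` set h \<and> length h < T")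
        case True
        have "q i j * GG f \<phi>1 \<psi>1 (h @ [(i, r j)]) \<le> q i j * GG f \<phi>2 \<psi>2 (h @ [(i, r j)])" if "j < J" for j
          using Suc.IH[OF inv[OF Suc.prems _ _ _ that]] True qnn that by (intro mult_left_mono) auto
        then show ?thesis using True Interview by (auto intro: sum_mono)
      qed (use Interview le2 Suc.prems in auto)
    qed (use le1 Suc.prems in auto)
  qed
qed

lemma GG_const:
  assumes qs: "\<forall>i<n. (\<Sum>j<J. q i j) = 1"
  shows "GG f (\<lambda>h H. c) (\<lambda>h. c) h = c"
proof (induction f arbitrary: h)
  case 0
  have "(\<lambda>a. case a of Stop H \<Rightarrow> c | Interview i \<Rightarrow> c) = (\<lambda>a. c)" by (auto split: action.splits)
  then show ?case by simp
next
  case (Suc f)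
  have "(\<lambda>a. case a of Stop H \<Rightarrow> c | Interview i \<Rightarrow> if i < n \<and> i \<notin> fst ` set h \<and> length h < T
        then \<Sum>j<J. q i j * GG f (\<lambda>h H. c) (\<lambda>h. c) (h @ [(i, r j)]) else c) = (\<lambda>a. c)"
  proof
    fix a show "(case a of Stop H \<Rightarrow> c | Interview i \<Rightarrow> if i < n \<and> i \<notin> fst ` set h \<and> length h < T
        then \<Sum>j<J. q i j * GG f (\<lambda>h H. c) (\<lambda>h. c) (h @ [(i, r j)]) else c) = c"
    proof (cases a)
      case (Interview i)
      have "i < n \<Longrightarrow> (\<Sum>j<J. q i j * c) = c" using qs by (simp add: sum_distrib_right[symmetric])
      then show ?thesis using Interview Suc by simp
    qed simp
  qed
  then show ?case by simp
qed

lemma bdd_const: "bdd (\<lambda>h H. c)" unfolding bdd_def by blast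

lemma GG_ub:
  assumes qnn: "\<forall>i<n. \<forall>j<J. 0 \<le> q i j" and qs: "\<forall>i<n. (\<Sum>j<J. q i j) = 1"
    and inv: "\<And>h i j. Inv h \<Longrightarrow> i < n \<Longrightarrow> i \<notin> fst ` set h \<Longrightarrow> length h < T \<Longrightarrow> j < J \<Longrightarrow> Inv (h @ [(i, r j)])"
    and le1: "\<And>h H. Inv h \<Longrightarrow> \<phi> h H \<le> c" and le2: "\<And>h. Inv h \<Longrightarrow> \<psi> h \<le> c"
    and b: "bdd \<phi>" and "Inv h"
  shows "GG f \<phi> \<psi> h \<le> c"
  using GG_mono[OF qnn inv le1 le2 b bdd_const \<open>Inv h\<close>] GG_const[OF qs] by simp

lemma GG_lb:
  assumes qnn: "\<forall>i<n. \<forall>j<J. 0 \<le> q i j" and qs: "\<forall>i<n. (\<Sum>j<J. q i j) = 1"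
    and inv: "\<And>h i j. Inv h \<Longrightarrow> i < n \<Longrightarrow> i \<notin> fst ` set h \<Longrightarrow> length h < T \<Longrightarrow> j < J \<Longrightarrow> Inv (h @ [(i, r j)])"
    and le1: "\<And>h H. Inv h \<Longrightarrow> c \<le> \<phi> h H" and le2: "\<And>h. Inv h \<Longrightarrow> c \<le> \<psi> h"
    and b: "bdd \<phi>" and "Inv h"
  shows "c \<le> GG f \<phi> \<psi> h"
  using GG_mono[OF qnn inv le1 le2 bdd_const b \<open>Inv h\<close>] GG_const[OF qs] by simp

lemma GG_scale: "GG f (\<lambda>h H. c * \<phi> h H) (\<lambda>h. c * \<psi> h) h = c * GG f \<phi> \<psi> h"
proof (induction f arbitrary: h)
  case 0
  have "(\<lambda>a. case a of Stop H \<Rightarrow> c * \<phi> h H | Interview i \<Rightarrow> c * \<psi> h)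
      = (\<lambda>a. c * (case a of Stop H \<Rightarrow> \<phi> h H | Interview i \<Rightarrow> \<psi> h))"
    by (auto split: action.splits)
  then show ?case by simp
next
  case (Suc f)
  have "(\<lambda>a. case a of Stop H \<Rightarrow> c * \<phi> h H | Interview i \<Rightarrow> if i < n \<and> i \<notin> fst ` set h \<and> length h < T
        then \<Sum>j<J. q i j * GG f (\<lambda>h H. c * \<phi> h H) (\<lambda>h. c * \<psi> h) (h @ [(i, r j)]) else c * \<psi> h)
      = (\<lambda>a. c * (case a of Stop H \<Rightarrow> \<phi> h H | Interview i \<Rightarrow> if i < n \<and> i \<notin> fst ` set h \<and> length h < T
        then \<Sum>j<J. q i j * GG f \<phi> \<psi> (h @ [(i, r j)]) else \<psi> h))"
    by (auto simp: Suc sum_distrib_left algebra_simps split: action.splits)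
  then show ?case by simp
qed

lemma GG_sum:
  assumes "finite M" "\<forall>m\<in>M. bdd (\<phi> m)"
  shows "GG f (\<lambda>h H. \<Sum>m\<in>M. \<phi> m h H) (\<lambda>h. \<Sum>m\<in>M. \<psi> m h) h = (\<Sum>m\<in>M. GG f (\<phi> m) (\<psi> m) h)"
proof (induction f arbitrary: h)
  case 0
  have "(\<lambda>a. case a of Stop H \<Rightarrow> \<Sum>m\<in>M. \<phi> m h H | Interview i \<Rightarrow> \<Sum>m\<in>M. \<psi> m h)
      = (\<lambda>a. \<Sum>m\<in>M. (case a of Stop H \<Rightarrow> \<phi> m h H | Interview i \<Rightarrow> \<psi> m h))"
    by (auto split: action.splits)
  then show ?case using assms by (simp add: integ_GG0)
next
  case (Suc f)
  have "(\<lambda>a. case a of Stop H \<Rightarrow> \<Sum>m\<in>M. \<phi> m h H | Interview i \<Rightarrow> if i < n \<and> i \<notin> fst ` set h \<and> length h < T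
        then \<Sum>j<J. q i j * GG f (\<lambda>h H. \<Sum>m\<in>M. \<phi> m h H) (\<lambda>h. \<Sum>m\<in>M. \<psi> m h) (h @ [(i, r j)])
        else \<Sum>m\<in>M. \<psi> m h)
      = (\<lambda>a. \<Sum>m\<in>M. (case a of Stop H \<Rightarrow> \<phi> m h H | Interview i \<Rightarrow> if i < n \<and> i \<notin> fst ` set h \<and> length h < T
        then \<Sum>j<J. q i j * GG f (\<phi> m) (\<psi> m) (h @ [(i, r j)]) else \<psi> m h))"
  proof
    fix a show "(case a of Stop H \<Rightarrow> \<Sum>m\<in>M. \<phi> m h H | Interview i \<Rightarrow> if i < n \<and> i \<notin> fst ` set h \<and> length h < T
        then \<Sum>j<J. q i j * GG f (\<lambda>h H. \<Sum>m\<in>M. \<phi> m h H) (\<lambda>h. \<Sum>m\<in>M. \<psi> m h) (h @ [(i, r j)])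
        else \<Sum>m\<in>M. \<psi> m h)
      = (\<Sum>m\<in>M. (case a of Stop H \<Rightarrow> \<phi> m h H | Interview i \<Rightarrow> if i < n \<and> i \<notin> fst ` set h \<and> length h < T
        then \<Sum>j<J. q i j * GG f (\<phi> m) (\<psi> m) (h @ [(i, r j)]) else \<psi> m h))"
    proof (cases a)
      case (Interview i)
      have sw: "(\<Sum>j<J. q i j * (\<Sum>m\<in>M. GG f (\<phi> m) (\<psi> m) (h @ [(i, r j)])))
          = (\<Sum>m\<in>M. \<Sum>j<J. q i j * GG f (\<phi> m) (\<psi> m) (h @ [(i, r j)]))"
        by (simp add: sum_distrib_left sum.swap[of _ M])
      show ?thesis
      proof (cases "i < n \<and> i \<notin> fst ` set h \<and> length h < T")
        case True then show ?thesis using Interview sw by (simp add: Suc)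
      next
        case False
        have "(\<Sum>m\<in>M. \<psi> m h) = (\<Sum>m\<in>M. (if i < n \<and> i \<notin> fst ` set h \<and> length h < T
            then \<Sum>j<J. q i j * GG f (\<phi> m) (\<psi> m) (h @ [(i, r j)]) else \<psi> m h))"
          by (rule sum.cong) (use False in auto)
        then show ?thesis unfolding Interview action.case if_not_P[OF False] .
      qed
    qed simp
  qed
  then show ?case unfolding GG.simps
    by (simp only:) (rule Bochner_Integration.integral_sum, use assms in \<open>auto intro: integ_GGS\<close>)
qed

end


definition good :: "nat \<Rightarrow> nat \<Rightarrow> nat \<Rightarrow> (nat \<Rightarrow> real) \<Rightarrow> hist \<Rightarrow> bool" where
  "good n T J r h \<longleftrightarrow> (\<forall>p\<in>set h. fst p < n \<and> snd p \<in> r ` {..<J}) \<and> distinct (map fst h) \<and> length h \<le> T"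

lemma good_ext: "good n T J r h \<Longrightarrow> i < n \<Longrightarrow> i \<notin> fst ` set h \<Longrightarrow> length h < T \<Longrightarrow> j < J
   \<Longrightarrow> good n T J r (h @ [(i, r j)])"
  unfolding good_def by auto

lemma pol_eval_GG: "pol_eval f n T k J r q \<pi> h = GG n T J r q \<pi> f (stop_value k) (\<lambda>h. 0) h"
proof (induction f arbitrary: h)
  case (Suc f) then show ?case by (simp only: pol_eval.simps GG.simps Suc.IH)
qed simp

lemma bdd_sum: "finite M \<Longrightarrow> \<forall>m\<in>M. bdd (\<phi> m) \<Longrightarrow> bdd (\<lambda>h H. \<Sum>m\<in>M. \<phi> m h H)"
proof -
  assume M: "finite M" "\<forall>m\<in>M. bdd (\<phi> m)"
  show ?thesis unfolding bdd_def
  proof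
    fix h
    have "\<forall>m\<in>M. \<exists>B. \<forall>H. \<bar>\<phi> m h H\<bar> \<le> B" using M unfolding bdd_def by blast
    then obtain Bf where Bf: "\<forall>m\<in>M. \<forall>H. \<bar>\<phi> m h H\<bar> \<le> Bf m" by metis
    have "\<bar>\<Sum>m\<in>M. \<phi> m h H\<bar> \<le> (\<Sum>m\<in>M. Bf m)" for H
      by (rule order_trans[OF sum_abs sum_mono]) (use Bf in auto)
    then show "\<exists>B. \<forall>H. \<bar>\<Sum>m\<in>M. \<phi> m h H\<bar> \<le> B" by blast
  qed
qed

lemma bdd_scale: "bdd \<phi> \<Longrightarrow> bdd (\<lambda>h H. c * \<phi> h H)"
  unfolding bdd_def
proof
  fix h assume "\<forall>h. \<exists>B. \<forall>H. \<bar>\<phi> h H\<bar> \<le> B"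
  then obtain B where B: "\<forall>H. \<bar>\<phi> h H\<bar> \<le> B" by blast
  have "\<bar>c * \<phi> h H\<bar> \<le> \<bar>c\<bar> * B" for H using B by (simp add: abs_mult mult_left_mono)
  then show "\<exists>B. \<forall>H. \<bar>c * \<phi> h H\<bar> \<le> B" by blast
qed

lemma bdd_01: "(\<And>h H. \<phi> h H = 0 \<or> \<phi> h H = 1) \<Longrightarrow> bdd \<phi>"
  unfolding bdd_def by (metis abs_0 abs_one order_refl zero_le_one)

lemma bdd_stop: "bdd (stop_value k)"
  unfolding bdd_def
proof
  fix h :: hist
  have "\<bar>stop_value k h H\<bar> \<le> (\<Sum>i\<in>fst ` set h. \<bar>the (map_of h i)\<bar>)" for H
  proof (cases "H \<subseteq> fst ` set h \<and> card H \<le> k")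
    case True
    then have "\<bar>stop_value k h H\<bar> \<le> (\<Sum>i\<in>H. \<bar>the (map_of h i)\<bar>)"
      by (simp add: stop_value_def sum_abs)
    also have "\<dots> \<le> (\<Sum>i\<in>fst ` set h. \<bar>the (map_of h i)\<bar>)"
      using True by (intro sum_mono2) auto
    finally show ?thesis .
  next
    case False then show ?thesis by (auto simp: stop_value_def intro: sum_nonneg)
  qed
  then show "\<exists>B. \<forall>H. \<bar>stop_value k h H\<bar> \<le> B" by blast
qed

lemma GG_scale0: "GG n T J r q \<pi> f (\<lambda>h H. c * \<phi> h H) (\<lambda>h. 0) h = c * GG n T J r q \<pi> f \<phi> (\<lambda>h. 0) h"
  using GG_scale[of n T J r q \<pi> f c \<phi> "\<lambda>h. 0" h] by simp

lemma GG_sum0: "finite M \<Longrightarrow> \<forall>m\<in>M. bdd (\<phi> m) \<Longrightarrow>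
  GG n T J r q \<pi> f (\<lambda>h H. \<Sum>m\<in>M. \<phi> m h H) (\<lambda>h. 0) h = (\<Sum>m\<in>M. GG n T J r q \<pi> f (\<phi> m) (\<lambda>h. 0) h)"
  using GG_sum[of M \<phi> n T J r q \<pi> f "\<lambda>m h. 0" h] by simp

lemma good_lookup:
  assumes "good n T J r h" "i \<in> fst ` set h" "inj_on r {..<J}"
  obtains j where "j < J" "map_of h i = Some (r j)"
    "\<And>j'. j' < J \<Longrightarrow> map_of h i = Some (r j') \<longleftrightarrow> j' = j"
proof -
  obtain u where u: "(i, u) \<in> set h" using assms(2) by auto
  have "map_of h i = Some u" using u assms(1) unfolding good_def by (intro map_of_is_SomeI) auto
  moreover obtain j where "j < J" "u = r j" using u assms(1) unfolding good_def by force
  moreover have "j' < J \<Longrightarrow> r j = r j' \<longleftrightarrow> j' = j" for j' using assms(3) \<open>j < J\<close>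
    unfolding inj_on_def by auto
  ultimately show ?thesis using that[of j] by simp
qed

definition Zg :: "nat \<Rightarrow> (nat \<Rightarrow> real) \<Rightarrow> nat \<Rightarrow> nat \<Rightarrow> hist \<Rightarrow> nat set \<Rightarrow> real" where
  "Zg k r i j h H = (if H \<subseteq> fst ` set h \<and> card H \<le> k \<and> i \<in> H \<and> map_of h i = Some (r j) then 1 else 0)"

definition Ind :: "nat \<Rightarrow> hist \<Rightarrow> real" where
  "Ind i h = (if i \<in> fst ` set h then 1 else 0)"

lemma bdd_Zg: "bdd (Zg k r i j)" by (rule bdd_01) (simp add: Zg_def)
lemma bdd_Ind: "bdd (\<lambda>h H. Ind i h)" by (rule bdd_01) (simp add: Ind_def)

lemma delta_sum:
  fixes g :: "nat \<Rightarrow> real"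
  assumes "good n T J r h" "i \<in> fst ` set h" "inj_on r {..<J}"
  shows "(\<Sum>j<J. g j * (if map_of h i = Some (r j) then 1 else 0)) = g (THE j. j < J \<and> map_of h i = Some (r j))"
    and "(THE j. j < J \<and> map_of h i = Some (r j)) < J"
    and "map_of h i = Some (r (THE j. j < J \<and> map_of h i = Some (r j)))"
proof -
  obtain j where j: "j < J" "map_of h i = Some (r j)" "\<And>j'. j' < J \<Longrightarrow> map_of h i = Some (r j') \<longleftrightarrow> j' = j"
    using good_lookup[OF assms] by blast
  have th: "(THE j. j < J \<and> map_of h i = Some (r j)) = j"
  proof (rule the_equality)
    show "j < J \<and> map_of h i = Some (r j)" using j by simp
    fix j' assume "j' < J \<and> map_of h i = Some (r j')" then show "j' = j" using j(3) by blast
  qed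
  have "(\<Sum>j'<J. g j' * (if map_of h i = Some (r j') then 1 else 0)) = (\<Sum>j'<J. if j' = j then g j' else 0)"
    using j by (intro sum.cong) auto
  also have "\<dots> = g j" using j by simp
  finally show "(\<Sum>j<J. g j * (if map_of h i = Some (r j) then 1 else 0)) = g (THE j. j < J \<and> map_of h i = Some (r j))"
    using th by simp
  show "(THE j. j < J \<and> map_of h i = Some (r j)) < J" unfolding th using j(1) .
  show "map_of h i = Some (r (THE j. j < J \<and> map_of h i = Some (r j)))" unfolding th using j(2) .
qed

lemma Zg_zero: "\<not> (H \<subseteq> fst ` set h \<and> card H \<le> k \<and> i \<in> H) \<Longrightarrow> Zg k r i j h H = 0"
proof -
  assume a: "\<not> (H \<subseteq> fst ` set h \<and> card H \<le> k \<and> i \<in> H)"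
  have "\<not> (H \<subseteq> fst ` set h \<and> card H \<le> k \<and> i \<in> H \<and> map_of h i = Some (r j))" using a by blast
  then show ?thesis unfolding Zg_def by (rule if_not_P)
qed

lemma Zg_sum_i:
  fixes g :: "nat \<Rightarrow> real"
  assumes "good n T J r h" "inj_on r {..<J}"
  shows "(\<Sum>j<J. g j * Zg k r i j h H) = (if H \<subseteq> fst ` set h \<and> card H \<le> k \<and> i \<in> H
     then g (THE j. j < J \<and> map_of h i = Some (r j)) else 0)"
proof (cases "H \<subseteq> fst ` set h \<and> card H \<le> k \<and> i \<in> H")
  case True
  then have "i \<in> fst ` set h" by auto
  then show ?thesis using True delta_sum(1)[OF assms(1) _ assms(2), of i g]
    by (simp add: Zg_def)
next
  case False
  then have "Zg k r i j h H = 0" for j by (rule Zg_zero)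
  then show ?thesis by (simp only: if_not_P[OF False] mult_zero_right sum.neutral_const)
qed

lemma stop_le:
  assumes "good n T J r h" "inj_on r {..<J}"
  shows "stop_value k h H \<le> (\<Sum>i<n. \<Sum>j<J. r j * Zg k r i j h H)"
proof (cases "H \<subseteq> fst ` set h \<and> card H \<le> k")
  case True
  have Hn: "H \<subseteq> {..<n}" using True assms(1) unfolding good_def by force
  have "(\<Sum>i<n. \<Sum>j<J. r j * Zg k r i j h H) = (\<Sum>i<n. if i \<in> H then r (THE j. j < J \<and> map_of h i = Some (r j)) else 0)"
    using True by (intro sum.cong refl) (simp add: Zg_sum_i[OF assms])
  also have "\<dots> = (\<Sum>i\<in>H. r (THE j. j < J \<and> map_of h i = Some (r j)))"
    using Hn by (simp add: sum.If_cases Int_absorb1)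
  also have "\<dots> = (\<Sum>i\<in>H. the (map_of h i))"
  proof (intro sum.cong refl)
    fix x assume "x \<in> H"
    then have "x \<in> fst ` set h" using True by auto
    from delta_sum(3)[OF assms(1) this assms(2)] show "r (THE j. j < J \<and> map_of h x = Some (r j)) = the (map_of h x)"
      by (metis option.sel)
  qed
  finally show ?thesis using True by (simp add: stop_value_def)
next
  case False
  then have "Zg k r i j h H = 0" for i j by (intro Zg_zero) blast
  moreover have "stop_value k h H = 0" unfolding stop_value_def using False by (rule if_not_P)
  ultimately show ?thesis by simp
qed

lemma Zg_tot:
  assumes "good n T J r h" "inj_on r {..<J}"
  shows "(\<Sum>i<n. \<Sum>j<J. Zg k r i j h H) \<le> real k"
proof (cases "H \<subseteq> fst ` set h \<and> card H \<le> k")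
  case True
  have zs: "(\<Sum>j<J. Zg k r i j h H) = (if H \<subseteq> fst ` set h \<and> card H \<le> k \<and> i \<in> H then 1 else 0)" for i
    using Zg_sum_i[OF assms, of "\<lambda>j. 1" k i H] by simp
  have "(\<Sum>i<n. \<Sum>j<J. Zg k r i j h H) = (\<Sum>i<n. if i \<in> H then 1 else 0)"
    using True by (intro sum.cong refl) (simp add: zs)
  also have "\<dots> = real (card ({..<n} \<inter> H))" by (simp add: sum.If_cases)
  also have "\<dots> \<le> real (card H)"
    using True by (intro of_nat_mono card_mono) (auto intro: finite_subset)
  also have "\<dots> \<le> real k" using True by simp
  finally show ?thesis .
next
  case False
  then have "Zg k r i j h H = 0" for i j by (intro Zg_zero) blast
  then show ?thesis by simp
qed

lemma Ind_tot:
  assumes "good n T J r h"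
  shows "(\<Sum>i<n. Ind i h) \<le> real T"
proof -
  have "(\<Sum>i<n. Ind i h) = real (card ({..<n} \<inter> fst ` set h))" by (simp add: Ind_def sum.If_cases)
  also have "\<dots> \<le> real (card (fst ` set h))" by (intro of_nat_mono card_mono) auto
  also have "\<dots> \<le> real (length h)"
    by (metis card_image_le card_length finite_set le_trans of_nat_mono)
  also have "\<dots> \<le> real T" using assms by (simp add: good_def)
  finally show ?thesis .
qed


lemma good_Nil: "good n T J r []" by (simp add: good_def)

lemma key_xy:
  assumes qnn: "\<forall>i<n. \<forall>j<J. 0 \<le> q i j" and qs: "\<forall>i<n. (\<Sum>j<J. q i j) = 1"
    and injr: "inj_on r {..<J}" and j: "j < J"
  shows "good n T J r h \<Longrightarrow> i < n \<Longrightarrow> i \<notin> fst ` set h \<Longrightarrow>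
    GG n T J r q \<pi> f (Zg k r i j) (\<lambda>h. 0) h \<le> q i j * GG n T J r q \<pi> f (\<lambda>h H. Ind i h) (Ind i) h"
proof (induction f arbitrary: h)
  case 0
  have "(\<lambda>a. case a of Stop H \<Rightarrow> Zg k r i j h H | Interview i \<Rightarrow> 0) = (\<lambda>a. 0)"
  proof
    fix a show "(case a of Stop H \<Rightarrow> Zg k r i j h H | Interview i \<Rightarrow> 0) = 0"
      using 0 by (cases a) (auto simp: Zg_def)
  qed
  then have "GG n T J r q \<pi> 0 (Zg k r i j) (\<lambda>h. 0) h = 0" by simp
  moreover have "0 \<le> GG n T J r q \<pi> 0 (\<lambda>h H. Ind i h) (Ind i) h"
    by (rule GG_lb[OF qnn qs good_ext _ _ bdd_Ind \<open>good n T J r h\<close>]) (auto simp: Ind_def)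
  ultimately show ?case using qnn 0 j by simp
next
  case (Suc f)
  have valid_inv: "\<And>h i j. good n T J r h \<Longrightarrow> i < n \<Longrightarrow> i \<notin> fst ` set h \<Longrightarrow> length h < T \<Longrightarrow> j < J \<Longrightarrow> good n T J r (h @ [(i, r j)])"
    by (rule good_ext)
  let ?F1 = "\<lambda>a. case a of Stop H \<Rightarrow> Zg k r i j h H | Interview i' \<Rightarrow> if i' < n \<and> i' \<notin> fst ` set h \<and> length h < T
        then \<Sum>j'<J. q i' j' * GG n T J r q \<pi> f (Zg k r i j) (\<lambda>h. 0) (h @ [(i', r j')]) else 0"
  let ?F2 = "\<lambda>a. case a of Stop H \<Rightarrow> Ind i h | Interview i' \<Rightarrow> if i' < n \<and> i' \<notin> fst ` set h \<and> length h < T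
        then \<Sum>j'<J. q i' j' * GG n T J r q \<pi> f (\<lambda>h H. Ind i h) (Ind i) (h @ [(i', r j')]) else Ind i h"
  have i1: "integrable (measure_pmf (\<pi> h)) ?F1" by (rule integ_GGS[OF bdd_Zg])
  have i2: "integrable (measure_pmf (\<pi> h)) ?F2" by (rule integ_GGS[OF bdd_Ind])
  have pt: "?F1 a \<le> q i j * ?F2 a" for a
  proof (cases a)
    case (Stop H)
    have "Zg k r i j h H = 0" using Suc.prems by (auto simp: Zg_def)
    then show ?thesis using Stop Suc.prems by (simp add: Ind_def)
  next
    case (Interview i')
    show ?thesis
    proof (cases "i' < n \<and> i' \<notin> fst ` set h \<and> length h < T")
      case False
      then show ?thesis using Interview Suc.prems qnn j by (auto simp: Ind_def)
    next
      case True
      have gd: "good n T J r (h @ [(i', r j')])" if "j' < J" for j'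
        using valid_inv[OF Suc.prems(1)] True that by blast
      show ?thesis
      proof (cases "i' = i")
        case False
        have "q i' j' * GG n T J r q \<pi> f (Zg k r i j) (\<lambda>h. 0) (h @ [(i', r j')])
           \<le> q i' j' * (q i j * GG n T J r q \<pi> f (\<lambda>h H. Ind i h) (Ind i) (h @ [(i', r j')]))" if "j' < J" for j'
          using Suc.IH[OF gd[OF that] Suc.prems(2)] Suc.prems(3) False True qnn that
          by (intro mult_left_mono) auto
        then have "(\<Sum>j'<J. q i' j' * GG n T J r q \<pi> f (Zg k r i j) (\<lambda>h. 0) (h @ [(i', r j')]))
           \<le> q i j * (\<Sum>j'<J. q i' j' * GG n T J r q \<pi> f (\<lambda>h H. Ind i h) (Ind i) (h @ [(i', r j')]))"
          by (auto simp: sum_distrib_left algebra_simps intro!: sum_mono)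
        then show ?thesis using Interview True by simp
      next
        case ii: True
        have up: "GG n T J r q \<pi> f (Zg k r i j) (\<lambda>h. 0) (h @ [(i, r j')]) \<le> (if j' = j then 1 else 0)"
          if "j' < J" for j'
        proof (cases "j' = j")
          case True
          have g2: "good n T J r (h @ [(i, r j')])" using gd[OF that] ii by simp
          have "GG n T J r q \<pi> f (Zg k r i j) (\<lambda>h. 0) (h @ [(i, r j')]) \<le> 1"
            by (rule GG_ub[where Inv="good n T J r", OF qnn qs valid_inv _ _ bdd_Zg g2]) (auto simp: Zg_def)
          then show ?thesis using True by simp
        next
          case False
          let ?Inv = "\<lambda>h'. good n T J r h' \<and> map_of h' i = Some (r j')"
          have inv: "?Inv h'' \<Longrightarrow> i'' < n \<Longrightarrow> i'' \<notin> fst ` set h'' \<Longrightarrow> length h'' < T \<Longrightarrow> j'' < J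
              \<Longrightarrow> ?Inv (h'' @ [(i'', r j'')])" for h'' i'' j''
            using good_ext[of n T J r h'' i'' j''] by (auto simp: map_add_def split: option.splits)
          have rr: "r j' \<noteq> r j" using False injr that j unfolding inj_on_def by auto
          have "map_of h i = None" using Suc.prems(3) by (simp add: map_of_eq_None_iff)
          then have "?Inv (h @ [(i, r j')])" using gd[OF that] ii by (auto simp: map_add_def)
          note I = this
          have "GG n T J r q \<pi> f (Zg k r i j) (\<lambda>h. 0) (h @ [(i, r j')]) \<le> 0"
            by (rule GG_ub[where Inv="?Inv" and c=0, OF qnn qs inv _ _ bdd_Zg I]) (use rr in \<open>auto simp: Zg_def\<close>)
          then show ?thesis using False by simp
        qed
        have lo: "1 \<le> GG n T J r q \<pi> f (\<lambda>h H. Ind i h) (Ind i) (h @ [(i, r j')])" if "j' < J" for j'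
        proof -
          let ?Inv = "\<lambda>h'. good n T J r h' \<and> i \<in> fst ` set h'"
          have inv: "?Inv h'' \<Longrightarrow> i'' < n \<Longrightarrow> i'' \<notin> fst ` set h'' \<Longrightarrow> length h'' < T \<Longrightarrow> j'' < J
              \<Longrightarrow> ?Inv (h'' @ [(i'', r j'')])" for h'' i'' j''
            using good_ext[of n T J r h'' i'' j''] by auto
          have I: "?Inv (h @ [(i, r j')])" using gd[OF that] ii by auto
          show ?thesis
            by (rule GG_lb[where Inv="?Inv" and c=1, OF qnn qs inv _ _ bdd_Ind I]) (auto simp: Ind_def)
        qed
        have "(\<Sum>j'<J. q i j' * GG n T J r q \<pi> f (Zg k r i j) (\<lambda>h. 0) (h @ [(i, r j')]))
            \<le> (\<Sum>j'<J. q i j' * (if j' = j then 1 else 0))"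
          using up qnn Suc.prems(2) by (intro sum_mono mult_left_mono) auto
        also have "\<dots> = q i j" using j by (simp add: if_distrib[of "\<lambda>x. q i _ * x"] cong: if_cong)
        also have "\<dots> = q i j * (\<Sum>j'<J. q i j' * 1)" using qs Suc.prems(2) by simp
        also have "\<dots> \<le> q i j * (\<Sum>j'<J. q i j' * GG n T J r q \<pi> f (\<lambda>h H. Ind i h) (Ind i) (h @ [(i, r j')]))"
          using lo qnn Suc.prems(2) j by (intro mult_left_mono sum_mono) auto
        finally show ?thesis using Interview True ii by simp
      qed
    qed
  qed
  have "GG n T J r q \<pi> (Suc f) (Zg k r i j) (\<lambda>h. 0) h = measure_pmf.expectation (\<pi> h) ?F1" by simp
  also have "\<dots> \<le> measure_pmf.expectation (\<pi> h) (\<lambda>a. q i j * ?F2 a)"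
    by (rule integral_mono[OF i1 _ pt]) (use i2 in simp)
  also have "\<dots> = q i j * measure_pmf.expectation (\<pi> h) ?F2" by simp
  finally show ?case by simp
qed


lemma policy_le:
  assumes vi: "valid_instance n T k J r q" and opt: "lp_optimal n T k J r q x y"
  shows "policy_reward n T k J r q \<pi> \<le> lp_obj n J r x"
proof -
  have qnn: "\<forall>i<n. \<forall>j<J. 0 \<le> q i j" and qs: "\<forall>i<n. (\<Sum>j<J. q i j) = 1"
    and injr: "inj_on r {..<J}" and r0: "\<forall>j<J. 0 \<le> r j"
    using vi unfolding valid_instance_def by auto
  define G where "G = GG n T J r q \<pi> T"
  define X where "X = (\<lambda>i j. if i < n \<and> j < J then G (Zg k r i j) (\<lambda>h. 0) [] else 0)"
  define Y where "Y = (\<lambda>i. if i < n then G (\<lambda>h H. Ind i h) (Ind i) [] else 0)"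
  have gN: "good n T J r []" by (rule good_Nil)
  note ext = good_ext[of n T J r]
  have Ya: "0 \<le> G (\<lambda>h H. Ind i h) (Ind i) []" for i unfolding G_def
    by (rule GG_lb[where Inv="good n T J r" and c=0, OF qnn qs ext _ _ bdd_Ind gN]) (auto simp: Ind_def)
  have Yb: "G (\<lambda>h H. Ind i h) (Ind i) [] \<le> 1" for i unfolding G_def
    by (rule GG_ub[where Inv="good n T J r" and c=1, OF qnn qs ext _ _ bdd_Ind gN]) (auto simp: Ind_def)
  have Y01: "0 \<le> Y i \<and> Y i \<le> 1" if "i < n" for i using Ya Yb by (simp add: Y_def)
  have Xa: "0 \<le> G (Zg k r i j) (\<lambda>h. 0) []" for i j unfolding G_def
    by (rule GG_lb[where Inv="good n T J r" and c=0, OF qnn qs ext _ _ bdd_Zg gN]) (auto simp: Zg_def)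
  have X0: "0 \<le> X i j" for i j using Xa by (simp add: X_def)
  have XY: "X i j \<le> Y i * q i j" if "i < n" "j < J" for i j
    using key_xy[OF qnn qs injr that(2) gN that(1), of \<pi> T k] that
    unfolding X_def Y_def G_def by (simp add: mult.commute)
  have sumY: "(\<Sum>i<n. Y i) \<le> real T"
  proof -
    have "(\<Sum>i<n. Y i) = (\<Sum>i<n. G (\<lambda>h H. Ind i h) (Ind i) [])" by (simp add: Y_def)
    also have "\<dots> = G (\<lambda>h H. \<Sum>i<n. Ind i h) (\<lambda>h. \<Sum>i<n. Ind i h) []"
      unfolding G_def by (rule GG_sum[symmetric]) (auto intro: bdd_Ind)
    also have "\<dots> \<le> real T" unfolding G_def
      by (rule GG_ub[where Inv="good n T J r", OF qnn qs ext _ _ bdd_sum gN]) (auto intro: Ind_tot bdd_Ind)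
    finally show ?thesis .
  qed
  have sumX: "(\<Sum>i<n. \<Sum>j<J. X i j) \<le> real k"
  proof -
    have "(\<Sum>i<n. \<Sum>j<J. X i j) = (\<Sum>i<n. \<Sum>j<J. G (Zg k r i j) (\<lambda>h. 0) [])" by (simp add: X_def)
    also have "\<dots> = (\<Sum>i<n. G (\<lambda>h H. \<Sum>j<J. Zg k r i j h H) (\<lambda>h. 0) [])"
      unfolding G_def by (intro sum.cong refl GG_sum0[symmetric]) (auto intro: bdd_Zg)
    also have "\<dots> = G (\<lambda>h H. \<Sum>i<n. \<Sum>j<J. Zg k r i j h H) (\<lambda>h. 0) []"
      unfolding G_def by (rule GG_sum0[symmetric]) (auto intro!: bdd_sum bdd_Zg)
    also have "\<dots> \<le> real k" unfolding G_def
      by (rule GG_ub[where Inv="good n T J r", OF qnn qs ext _ _ _ gN])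
         (auto intro!: Zg_tot injr bdd_sum bdd_Zg)
    finally show ?thesis .
  qed
  have feas: "lp_feasible n T k J q X Y"
    unfolding lp_feasible_def using Y01 Xa XY sumY sumX by (auto simp: X_def Y_def)
  have "policy_reward n T k J r q \<pi> = G (stop_value k) (\<lambda>h. 0) []"
    by (simp add: policy_reward_def pol_eval_GG G_def)
  also have "\<dots> \<le> G (\<lambda>h H. \<Sum>i<n. \<Sum>j<J. r j * Zg k r i j h H) (\<lambda>h. 0) []"
    unfolding G_def
    by (rule GG_mono[where Inv="good n T J r", OF qnn ext _ _ bdd_stop _ gN])
       (auto intro!: stop_le injr bdd_sum bdd_scale bdd_Zg)
  also have "\<dots> = (\<Sum>i<n. \<Sum>j<J. r j * G (Zg k r i j) (\<lambda>h. 0) [])"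
  proof -
    have "G (\<lambda>h H. \<Sum>i<n. \<Sum>j<J. r j * Zg k r i j h H) (\<lambda>h. 0) [] = (\<Sum>i<n. G (\<lambda>h H. \<Sum>j<J. r j * Zg k r i j h H) (\<lambda>h. 0) [])"
      unfolding G_def by (rule GG_sum0) (auto intro!: bdd_sum bdd_scale bdd_Zg)
    also have "\<dots> = (\<Sum>i<n. \<Sum>j<J. G (\<lambda>h H. r j * Zg k r i j h H) (\<lambda>h. 0) [])"
      unfolding G_def by (intro sum.cong refl GG_sum0) (auto intro!: bdd_scale bdd_Zg)
    also have "\<dots> = (\<Sum>i<n. \<Sum>j<J. r j * G (Zg k r i j) (\<lambda>h. 0) [])"
      unfolding G_def by (intro sum.cong refl GG_scale0)
    finally show ?thesis .
  qed
  also have "\<dots> = lp_obj n J r X" by (simp add: lp_obj_def X_def)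
  also have "\<dots> \<le> lp_obj n J r x" using opt feas unfolding lp_optimal_def by blast
  finally show ?thesis .
qed

lemma opt_le:
  assumes vi: "valid_instance n T k J r q" and opt: "lp_optimal n T k J r q x y"
  shows "opt_ptk n T k J r q \<le> lp_obj n J r x"
  unfolding opt_ptk_def by (rule cSUP_least) (auto intro: policy_le[OF vi opt])

lemma lp_value_eq:
  assumes opt: "lp_optimal n T k J r q x y"
  shows "lp_value n T k J r q = lp_obj n J r x"
  unfolding lp_value_def
proof (rule cSup_eq_maximum)
  show "lp_obj n J r x \<in> {lp_obj n J r x |x y. lp_feasible n T k J q x y}"
    using opt unfolding lp_optimal_def by blast
  show "\<And>z. z \<in> {lp_obj n J r x |x y. lp_feasible n T k J q x y} \<Longrightarrow> z \<le> lp_obj n J r x"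
    using opt unfolding lp_optimal_def by blast
qed


lemma perturb:
  assumes bfs: "lp_bfs n T k J q x y"
    and eF: "\<forall>i. e i \<noteq> 0 \<longrightarrow> i < n \<and> 0 < y i \<and> y i < 1"
    and ne: "e i0 \<noteq> 0"
    and ex: "(\<Sum>i<n. e i * (\<Sum>j<J. x i j)) = 0"
    and ey: "(\<Sum>i<n. e i * y i) = 0 \<or> (\<Sum>i<n. y i) < real T"
  shows False
proof -
  have feas: "lp_feasible n T k J q x y" using bfs unfolding lp_bfs_def by blast
  define F where "F = {i. e i \<noteq> 0}"
  have Fn: "F \<subseteq> {..<n}" using eF unfolding F_def by auto
  have finF: "finite F" using Fn finite_subset by blast
  have i0F: "i0 \<in> F" using ne unfolding F_def by simp
  define m where "m = Min ((\<lambda>i. 1 - y i) ` F)"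
  have mpos: "0 < m" unfolding m_def using finF i0F eF F_def by (subst Min_gr_iff) auto
  have mle: "i \<in> F \<Longrightarrow> m \<le> 1 - y i" for i unfolding m_def using finF by (intro Min_le) auto
  define SE where "SE = (\<Sum>i<n. e i * y i)"
  define s where "s = (if SE = 0 then 1 else real T - (\<Sum>i<n. y i))"
  have spos: "0 < s" using ey unfolding s_def SE_def by auto
  define E where "E = (\<Sum>i<n. \<bar>e i\<bar>) + \<bar>SE\<bar> + 1"
  have E1: "1 \<le> E" unfolding E_def by (simp add: sum_nonneg)
  define \<delta> where "\<delta> = min m s / E"
  have dpos: "0 < \<delta>" unfolding \<delta>_def using mpos spos E1 by simp
  have dE: "\<delta> * E = min m s" unfolding \<delta>_def using E1 by simp
  have de: "\<delta> * \<bar>e i\<bar> \<le> 1 - y i" if "e i \<noteq> 0" for i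
  proof -
    have "i < n" using eF that by blast
    then have "\<bar>e i\<bar> \<le> (\<Sum>i<n. \<bar>e i\<bar>)" by (intro member_le_sum) auto
    then have "\<bar>e i\<bar> \<le> E" unfolding E_def by simp
    then have "\<delta> * \<bar>e i\<bar> \<le> \<delta> * E" using dpos by (intro mult_left_mono) auto
    also have "\<dots> \<le> m" using dE by simp
    also have "\<dots> \<le> 1 - y i" using mle that unfolding F_def by simp
    finally show ?thesis .
  qed
  have dS: "\<delta> * \<bar>SE\<bar> \<le> s"
  proof -
    have "\<delta> * \<bar>SE\<bar> \<le> \<delta> * E" using dpos unfolding E_def by (intro mult_left_mono) (auto simp: sum_nonneg)
    then show ?thesis using dE by simp
  qed
  define xd where "xd = (\<lambda>d i j. x i j * (1 + d * e i))"
  define yd where "yd = (\<lambda>d i. y i * (1 + d * e i))"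
  have fd: "lp_feasible n T k J q (xd d) (yd d)" if d: "\<bar>d\<bar> = \<delta>" for d
  proof -
    have fac: "0 \<le> 1 + d * e i \<and> y i * (1 + d * e i) \<le> 1" if "i < n" for i
    proof (cases "e i = 0")
      case True then show ?thesis using feas that unfolding lp_feasible_def by simp
    next
      case False
      have yi: "0 < y i" "y i < 1" using eF False by auto
      have a: "\<bar>d * e i\<bar> \<le> 1 - y i" using de[OF False] d by (simp add: abs_mult)
      have b1: "y i * \<bar>d * e i\<bar> \<le> \<bar>d * e i\<bar>" using yi by (intro mult_left_le_one_le) auto
      have b2: "y i * (d * e i) \<le> y i * \<bar>d * e i\<bar>" using yi by (intro mult_left_mono) auto
      have c: "y i * (1 + d * e i) = y i + y i * (d * e i)" by (simp add: algebra_simps)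
      have "- \<bar>d * e i\<bar> \<le> d * e i" by simp
      then show ?thesis using a yi b1 b2 c by linarith
    qed
    have sy: "(\<Sum>i<n. yd d i) = (\<Sum>i<n. y i) + d * SE"
      unfolding yd_def SE_def by (simp add: algebra_simps sum.distrib sum_distrib_left)
    have sy2: "(\<Sum>i<n. yd d i) \<le> real T"
    proof (cases "SE = 0")
      case True then show ?thesis using sy feas unfolding lp_feasible_def by simp
    next
      case False
      have "d * SE \<le> \<bar>d\<bar> * \<bar>SE\<bar>" by (metis abs_ge_self abs_mult)
      then have "d * SE \<le> s" using dS d by simp
      then show ?thesis using sy False unfolding s_def by simp
    qed
    have sx: "(\<Sum>i<n. \<Sum>j<J. xd d i j) = (\<Sum>i<n. \<Sum>j<J. x i j) + d * (\<Sum>i<n. e i * (\<Sum>j<J. x i j))"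
      unfolding xd_def by (simp add: algebra_simps sum.distrib sum_distrib_left sum_distrib_right)
    have A: "0 \<le> yd d i \<and> yd d i \<le> 1 \<and> (\<forall>j<J. 0 \<le> xd d i j \<and> xd d i j \<le> yd d i * q i j)" if i: "i < n" for i
    proof -
      have f1: "0 \<le> y i" "y i \<le> 1" "\<forall>j<J. 0 \<le> x i j \<and> x i j \<le> y i * q i j"
        using feas i unfolding lp_feasible_def by auto
      have g1: "0 \<le> yd d i" unfolding yd_def using f1 fac[OF i] by simp
      have g2: "yd d i \<le> 1" unfolding yd_def using fac[OF i] by simp
      have g3: "0 \<le> xd d i j \<and> xd d i j \<le> yd d i * q i j" if j: "j < J" for j
      proof
        show "0 \<le> xd d i j" unfolding xd_def using f1 fac[OF i] j by simp
        have "x i j * (1 + d * e i) \<le> (y i * q i j) * (1 + d * e i)"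
          using f1 fac[OF i] j by (intro mult_right_mono) auto
        then show "xd d i j \<le> yd d i * q i j" unfolding xd_def yd_def by (simp add: algebra_simps)
      qed
      show ?thesis using g1 g2 g3 by blast
    qed
    have B: "(\<Sum>i<n. \<Sum>j<J. xd d i j) \<le> real k" using sx ex feas unfolding lp_feasible_def by simp
    have C: "\<forall>i j. n \<le> i \<or> J \<le> j \<longrightarrow> xd d i j = 0" using feas unfolding lp_feasible_def xd_def by auto
    have D: "\<forall>i. n \<le> i \<longrightarrow> yd d i = 0" using feas unfolding lp_feasible_def yd_def by auto
    show ?thesis unfolding lp_feasible_def using A B C D sy2 by blast
  qed
  have f1: "lp_feasible n T k J q (xd \<delta>) (yd \<delta>)" using fd dpos by simp
  have f2: "lp_feasible n T k J q (xd (- \<delta>)) (yd (- \<delta>))" using fd dpos by simp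
  have y0: "0 < y i0" using eF ne by blast
  have neq: "yd \<delta> i0 \<noteq> yd (- \<delta>) i0" unfolding yd_def using y0 dpos ne by simp
  have "x = (\<lambda>i j. (xd \<delta> i j + xd (- \<delta>) i j) / 2)" unfolding xd_def by (simp add: algebra_simps)
  moreover have "y = (\<lambda>i. (yd \<delta> i + yd (- \<delta>) i) / 2)" unfolding yd_def by (simp add: algebra_simps)
  moreover have "(xd \<delta>, yd \<delta>) \<noteq> (xd (- \<delta>), yd (- \<delta>))" using neq by auto
  ultimately show False using bfs f1 f2 unfolding lp_bfs_def by blast
qed


lemma sum3:
  fixes g :: "nat \<Rightarrow> real"
  assumes "a < n" "b < n" "c < n" "a \<noteq> b" "a \<noteq> c" "b \<noteq> c"
  shows "(\<Sum>i<n. (if i = a then u else if i = b then v else if i = c then w else 0) * g i) = u * g a + v * g b + w * g c"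
proof -
  have "(\<Sum>i<n. (if i = a then u else if i = b then v else if i = c then w else 0) * g i)
      = (\<Sum>i<n. (if i = a then u * g a else 0) + (if i = b then v * g b else 0) + (if i = c then w * g c else 0))"
    using assms by (intro sum.cong) auto
  also have "\<dots> = u * g a + v * g b + w * g c" using assms by (simp add: sum.distrib)
  finally show ?thesis .
qed

lemma Fr_card:
  assumes bfs: "lp_bfs n T k J q x y"
  shows "card {i. i < n \<and> 0 < y i \<and> y i < 1} \<le> 2"
proof (rule ccontr)
  define Fr where "Fr = {i. i < n \<and> 0 < y i \<and> y i < 1}"
  assume "\<not> card {i. i < n \<and> 0 < y i \<and> y i < 1} \<le> 2"
  then have "3 \<le> card Fr" unfolding Fr_def by simp
  then obtain S where S: "S \<subseteq> Fr" "card S = 3" by (meson obtain_subset_with_card_n)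
  then obtain a b c where abc: "S = {a, b, c}" "a \<noteq> b" "a \<noteq> c" "b \<noteq> c"
    by (metis card_3_iff)
  have inF: "a \<in> Fr" "b \<in> Fr" "c \<in> Fr" using S abc by auto
  define s where "s = (\<lambda>i. \<Sum>j<J. x i j)"
  define c1 where "c1 = y b * s c - y c * s b"
  define c2 where "c2 = y c * s a - y a * s c"
  define c3 where "c3 = y a * s b - y b * s a"
  define u where "u = (if (c1, c2, c3) \<noteq> (0, 0, 0) then c1 else y b)"
  define v where "v = (if (c1, c2, c3) \<noteq> (0, 0, 0) then c2 else - y a)"
  define w where "w = (if (c1, c2, c3) \<noteq> (0, 0, 0) then c3 else 0)"
  define e where "e = (\<lambda>i. if i = a then u else if i = b then v else if i = c then w else 0)"
  have lt: "a < n" "b < n" "c < n" using inF unfolding Fr_def by auto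
  have ya: "0 < y a" "0 < y b" using inF unfolding Fr_def by auto
  have eF: "\<forall>i. e i \<noteq> 0 \<longrightarrow> i < n \<and> 0 < y i \<and> y i < 1"
    using inF unfolding e_def Fr_def by auto
  have ne: "\<exists>i0. e i0 \<noteq> 0"
  proof (cases "(c1, c2, c3) \<noteq> (0, 0, 0)")
    case True
    then have "e a \<noteq> 0 \<or> e b \<noteq> 0 \<or> e c \<noteq> 0" unfolding e_def u_def v_def w_def using abc by auto
    then show ?thesis by blast
  next
    case False
    then have "e a \<noteq> 0" unfolding e_def u_def using ya by auto
    then show ?thesis by blast
  qed
  then obtain i0 where ne: "e i0 \<noteq> 0" by blast
  have ex: "(\<Sum>i<n. e i * s i) = 0"
    unfolding e_def using lt abc
    by (subst sum3) (auto simp: u_def v_def w_def c1_def c2_def c3_def algebra_simps)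
  have ey: "(\<Sum>i<n. e i * y i) = 0"
    unfolding e_def using lt abc
    by (subst sum3) (auto simp: u_def v_def w_def c1_def c2_def c3_def algebra_simps)
  show False using perturb[OF bfs eF ne] ex ey unfolding s_def by blast
qed

lemma Fr_two:
  assumes bfs: "lp_bfs n T k J q x y" and two: "{i. i < n \<and> 0 < y i \<and> y i < 1} = {a, b}" "a \<noteq> b"
  shows "y a + y b = 1"
proof -
  define Fr where "Fr = {i. i < n \<and> 0 < y i \<and> y i < 1}"
  have feas: "lp_feasible n T k J q x y" using bfs unfolding lp_bfs_def by blast
  have inF: "a \<in> Fr" "b \<in> Fr" using two unfolding Fr_def by auto
  have lt: "a < n" "b < n" and ya: "0 < y a" "y a < 1" "0 < y b" "y b < 1" using inF unfolding Fr_def by auto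
  have sT: "(\<Sum>i<n. y i) = real T"
  proof (rule ccontr)
    assume "(\<Sum>i<n. y i) \<noteq> real T"
    then have lessT: "(\<Sum>i<n. y i) < real T" using feas unfolding lp_feasible_def by simp
    define s where "s = (\<lambda>i. \<Sum>j<J. x i j)"
    define u where "u = (if (s a, s b) \<noteq> (0, 0) then s b else 1)"
    define v where "v = (if (s a, s b) \<noteq> (0, 0) then - s a else 0)"
    define e where "e = (\<lambda>i. if i = a then u else if i = b then v else if i = a then 0 else 0)"
    have eF: "\<forall>i. e i \<noteq> 0 \<longrightarrow> i < n \<and> 0 < y i \<and> y i < 1"
      using lt ya unfolding e_def by auto
    have "\<exists>i0. e i0 \<noteq> 0"
    proof (cases "(s a, s b) \<noteq> (0, 0)")
      case True
      then have "e a \<noteq> 0 \<or> e b \<noteq> 0" unfolding e_def u_def v_def using two by auto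
      then show ?thesis by blast
    next
      case False
      then have "e a \<noteq> 0" unfolding e_def u_def by auto
      then show ?thesis by blast
    qed
    then obtain i0 where ne: "e i0 \<noteq> 0" by blast
    have "(\<Sum>i<n. e i * s i) = (\<Sum>i<n. (if i = a then u * s a else 0) + (if i = b then v * s b else 0))"
      unfolding e_def using two by (intro sum.cong) auto
    also have "\<dots> = u * s a + v * s b" using lt by (simp add: sum.distrib)
    also have "\<dots> = 0" unfolding u_def v_def by auto
    finally have ex: "(\<Sum>i<n. e i * s i) = 0" .
    show False using perturb[OF bfs eF ne] ex lessT unfolding s_def by blast
  qed
  define B where "B = {i. i < n \<and> y i = 1}"
  have dec: "y i = (if i \<in> B then 1 else 0) + (if i \<in> Fr then y i else 0)" if "i < n" for i
  proof -
    have "0 \<le> y i" "y i \<le> 1" using feas that unfolding lp_feasible_def by auto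
    then show ?thesis unfolding B_def Fr_def using that by auto
  qed
  have "(\<Sum>i<n. y i) = (\<Sum>i<n. (if i \<in> B then 1 else 0) + (if i \<in> Fr then y i else 0))"
    using dec by (intro sum.cong) auto
  also have "\<dots> = real (card B) + (y a + y b)"
  proof -
    have "(\<Sum>i<n. (if i \<in> B then 1 else 0 :: real)) = real (card ({..<n} \<inter> B))" by (simp add: sum.If_cases)
    also have "{..<n} \<inter> B = B" unfolding B_def by auto
    finally have 1: "(\<Sum>i<n. (if i \<in> B then 1 else 0 :: real)) = real (card B)" .
    have "(\<Sum>i<n. (if i \<in> Fr then y i else 0)) = (\<Sum>i\<in>{..<n} \<inter> Fr. y i)" by (simp add: sum.If_cases)
    also have "{..<n} \<inter> Fr = {a, b}" unfolding Fr_def using two by auto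
    finally have 2: "(\<Sum>i<n. (if i \<in> Fr then y i else 0)) = y a + y b" using two by simp
    show ?thesis using 1 2 by (simp add: sum.distrib)
  qed
  finally have eq: "y a + y b = real T - real (card B)" using sT by simp
  define z where "z = int T - int (card B)"
  have "real_of_int z = y a + y b" unfolding z_def eq by simp
  then have "0 < real_of_int z" "real_of_int z < 2" using ya by auto
  then have "z = 1" by linarith
  then show ?thesis using \<open>real_of_int z = y a + y b\<close> by simp
qed


context
  fixes n T k J :: nat and r :: "nat \<Rightarrow> real" and q :: "nat \<Rightarrow> nat \<Rightarrow> real"
    and x :: "nat \<Rightarrow> nat \<Rightarrow> real" and y :: "nat \<Rightarrow> real"
  assumes vi: "valid_instance n T k J r q" and feas: "lp_feasible n T k J q x y"
begin

lemma qnn: "i < n \<Longrightarrow> j < J \<Longrightarrow> 0 \<le> q i j" and qs: "i < n \<Longrightarrow> (\<Sum>j<J. q i j) = 1"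
  and r0: "j < J \<Longrightarrow> 0 \<le> r j"
  using vi unfolding valid_instance_def by auto

lemma xfe: "i < n \<Longrightarrow> j < J \<Longrightarrow> 0 \<le> x i j \<and> x i j \<le> y i * q i j"
  and yfe: "i < n \<Longrightarrow> 0 \<le> y i \<and> y i \<le> 1"
  and sumx: "(\<Sum>i<n. \<Sum>j<J. x i j) \<le> real k"
  using feas unfolding lp_feasible_def by auto

lemma x0: "i < n \<Longrightarrow> y i = 0 \<Longrightarrow> j < J \<Longrightarrow> x i j = 0"
  using xfe[of i j] by auto

lemma sx0: "i < n \<Longrightarrow> 0 \<le> (\<Sum>j<J. x i j)"
  using xfe by (auto intro: sum_nonneg)

lemma ap: "i < n \<Longrightarrow> y i * alg_p J x y i = (\<Sum>j<J. x i j)"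
  unfolding alg_p_def using x0 by auto

lemma p01: "i < n \<Longrightarrow> 0 \<le> alg_p J x y i \<and> alg_p J x y i \<le> 1"
proof -
  assume i: "i < n"
  show ?thesis
  proof (cases "y i = 0")
    case True then show ?thesis by (simp add: alg_p_def)
  next
    case False
    then have yp: "0 < y i" using yfe[OF i] by auto
    have "(\<Sum>j<J. x i j) \<le> (\<Sum>j<J. y i * q i j)" using xfe[OF i] by (intro sum_mono) auto
    also have "\<dots> = y i" using qs[OF i] by (simp add: sum_distrib_left[symmetric])
    finally have "(\<Sum>j<J. x i j) \<le> y i" .
    then show ?thesis using yp sx0[OF i] False by (simp add: alg_p_def divide_le_eq_1)
  qed
qed

lemma v0: "i < n \<Longrightarrow> 0 \<le> alg_v J r x i"
  unfolding alg_v_def Let_def using xfe r0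
  by (auto intro!: divide_nonneg_nonneg sum_nonneg sx0 mult_nonneg_nonneg)

lemma apv: "i < n \<Longrightarrow> y i * alg_p J x y i * alg_v J r x i = (\<Sum>j<J. r j * x i j)"
proof -
  assume i: "i < n"
  show ?thesis
  proof (cases "(\<Sum>j<J. x i j) = 0")
    case True
    then have "\<forall>j<J. x i j = 0" using xfe[OF i] by (subst (asm) sum_nonneg_eq_0_iff) auto
    then show ?thesis using True ap[OF i] by simp
  next
    case False
    then show ?thesis using ap[OF i] by (simp add: alg_v_def)
  qed
qed

lemma hp_eq: "i < n \<Longrightarrow> j < J \<Longrightarrow> 0 < y i \<Longrightarrow> q i j * alg_hire_prob q x y i j = x i j / y i"
proof -
  assume ij: "i < n" "j < J" and y: "0 < y i"
  show ?thesis
  proof (cases "q i j = 0")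
    case True
    then have "x i j = 0" using xfe[OF ij] by auto
    then show ?thesis using True by (simp add: alg_hire_prob_def)
  next
    case False
    then show ?thesis using y by (simp add: alg_hire_prob_def)
  qed
qed

lemma proc_eq:
  assumes "set L \<subseteq> {i. i < n \<and> 0 < y i}"
  shows "alg_proc k J r q x y L h = QQ k (alg_p J x y) (alg_v J r x) L h"
  using assms
proof (induction L arbitrary: h)
  case Nil then show ?case by simp
next
  case (Cons i L)
  have i: "i < n" "0 < y i" using Cons.prems by auto
  define p where "p = alg_p J x y i"
  define v where "v = alg_v J r x i"
  define A1 where "A1 = QQ k (alg_p J x y) (alg_v J r x) L (Suc h)"
  define A0 where "A0 = QQ k (alg_p J x y) (alg_v J r x) L h"
  have IH: "alg_proc k J r q x y L h' = QQ k (alg_p J x y) (alg_v J r x) L h'" for h'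
    using Cons by auto
  have w1: "(\<Sum>j<J. q i j * alg_hire_prob q x y i j) = p"
  proof -
    have "(\<Sum>j<J. q i j * alg_hire_prob q x y i j) = (\<Sum>j<J. x i j / y i)"
      using hp_eq i by (intro sum.cong) auto
    also have "\<dots> = p" unfolding p_def alg_p_def using i by (simp add: sum_divide_distrib)
    finally show ?thesis .
  qed
  have w2: "(\<Sum>j<J. q i j * alg_hire_prob q x y i j * r j) = p * v"
  proof -
    have "(\<Sum>j<J. q i j * alg_hire_prob q x y i j * r j) = (\<Sum>j<J. r j * x i j) / y i"
      using hp_eq i by (simp add: sum_divide_distrib) (intro sum.cong, auto)
    also have "\<dots> = p * v" unfolding p_def v_def using apv[OF i(1)] i by (simp add: field_simps)
    finally show ?thesis .
  qed
  have "(\<Sum>j<J. q i j * (alg_hire_prob q x y i j * (r j + A1) + (1 - alg_hire_prob q x y i j) * A0))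
      = (\<Sum>j<J. q i j * alg_hire_prob q x y i j * r j + (q i j * alg_hire_prob q x y i j) * (A1 - A0) + q i j * A0)"
    by (intro sum.cong) (auto simp: algebra_simps)
  also have "\<dots> = p * v + p * (A1 - A0) + A0"
    using w1 w2 qs[OF i(1)] by (simp add: sum.distrib sum_distrib_right[symmetric])
  finally have S: "(\<Sum>j<J. q i j * (alg_hire_prob q x y i j * (r j + A1) + (1 - alg_hire_prob q x y i j) * A0))
      = p * (v + A1) + (1 - p) * A0" by (simp add: algebra_simps)
  show ?case using S IH unfolding A1_def A0_def p_def v_def by simp
qed

end


lemma mset_filter_list: "distinct L \<Longrightarrow> set L = S \<Longrightarrow>
   mset (map p (filter P L)) = image_mset p (filter_mset P (mset_set S))"
proof -
  assume d: "distinct L" and s: "set L = S"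
  have "mset L = mset_set S" using mset_set_set[OF d] s by simp
  then show ?thesis by (simp add: mset_filter)
qed

lemma sum_filter_list: "distinct L \<Longrightarrow> set L = S \<Longrightarrow>
   sum_list (map p (filter P L)) = (\<Sum>i\<in>S. if P i then p i else (0::real))"
proof -
  assume d: "distinct L" and s: "set L = S"
  have "sum_list (map p (filter P L)) = sum p (set (filter P L))"
    using d by (intro sum_list_distinct_conv_sum_set) simp
  also have "set (filter P L) = {i \<in> S. P i}" using s by auto
  also have "sum p {i \<in> S. P i} = (\<Sum>i\<in>S. if P i then p i else 0)"
    using s by (intro sum.inter_filter) auto
  finally show ?thesis .
qed

lemma CC_insert:
  assumes "distinct L1" "set L1 = insert a S" "distinct L0" "set L0 = S" "a \<notin> S"
  shows "CC k (map p (filter P L1)) h = CC k (map p (filter P L0)) h + (if P a then p a else 0) * DD k (map p (filter P L0)) h"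
proof -
  have fin: "finite S" using assms(4) by auto
  have ins: "mset_set (insert a S) = add_mset a (mset_set S)" using fin assms(5) by simp
  have m1: "mset (map p (filter P L1)) = image_mset p (filter_mset P (add_mset a (mset_set S)))"
    by (simp only: mset_filter_list[OF assms(1,2)] ins)
  have m0: "mset (map p (filter P L0)) = image_mset p (filter_mset P (mset_set S))"
    by (rule mset_filter_list[OF assms(3,4)])
  show ?thesis
  proof (cases "P a")
    case True
    then have "mset (map p (filter P L1)) = mset (p a # map p (filter P L0))"
      by (simp only: m1 m0 filter_mset_add_mset if_True image_mset_add_mset mset.simps list.map)
    then have "CC k (map p (filter P L1)) h = CC k (p a # map p (filter P L0)) h" by (rule CC_mset)
    then show ?thesis using True by (simp only: CC_cons if_True)
  next
    case False
    then have "mset (map p (filter P L1)) = mset (map p (filter P L0))"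
      by (simp only: m1 m0 filter_mset_add_mset if_False)
    then have "CC k (map p (filter P L1)) h = CC k (map p (filter P L0)) h" by (rule CC_mset)
    then show ?thesis using False by simp
  qed
qed

lemma comb:
  assumes "\<forall>u\<in>set L0. 0 \<le> u \<and> u \<le> 1" "0 \<le> u" "u \<le> 1" "u + sum_list L0 \<le> real k" "0 < k"
  shows "(1 - exp (- real k) * real k ^ k / fact k) * (u + sum_list L0) \<le> CC k L0 0 + u * DD k L0 0"
  using CC_main[of "u # L0" k] assms by (simp add: DD_def algebra_simps)


context
  fixes n T k J :: nat and r :: "nat \<Rightarrow> real" and q :: "nat \<Rightarrow> nat \<Rightarrow> real"
    and x :: "nat \<Rightarrow> nat \<Rightarrow> real" and y :: "nat \<Rightarrow> real" and \<sigma> :: "nat set \<Rightarrow> nat list"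
  assumes vi: "valid_instance n T k J r q" and opt: "lp_optimal n T k J r q x y"
    and bfs: "lp_bfs n T k J q x y" and ord: "alg_order_ok n (alg_v J r x) \<sigma>"
begin

definition "Fr = {i. i < n \<and> 0 < y i \<and> y i < 1}"
definition "BB = {i. i < n \<and> y i = 1}"
abbreviation "ck \<equiv> 1 - exp (- real k) * real k ^ k / fact k"
abbreviation "pp \<equiv> alg_p J x y"

lemma feas: "lp_feasible n T k J q x y" using opt unfolding lp_optimal_def by blast
lemma kpos: "0 < k" using vi unfolding valid_instance_def by auto

lemma sig: "S \<subseteq> {..<n} \<Longrightarrow> set (\<sigma> S) = S \<and> distinct (\<sigma> S) \<and> sorted_wrt (\<lambda>a b. alg_v J r x b \<le> alg_v J r x a) (\<sigma> S)"
  using ord unfolding alg_order_ok_def by blast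

lemma from_Ss:
  fixes Ss :: "(real \<times> nat set) list"
  assumes rew: "alg_reward n k J r q x y \<sigma> = (\<Sum>(w,S)\<leftarrow>Ss. w * alg_proc k J r q x y (\<sigma> S) 0)"
    and sub: "\<forall>(w,S)\<in>set Ss. S \<subseteq> {i. i < n \<and> 0 < y i}"
    and ind: "\<forall>P. ck * (\<Sum>i<n. if P i then y i * pp i else 0) \<le> (\<Sum>(w,S)\<leftarrow>Ss. w * CC k (map pp (filter P (\<sigma> S))) 0)"
  shows "ck * lp_value n T k J r q \<le> alg_reward n k J r q x y \<sigma>"
proof -
  have subn: "S \<subseteq> {..<n}" if "(w, S) \<in> set Ss" for w S
  proof -
    have "S \<subseteq> {i. i < n \<and> 0 < y i}" using sub that by blast
    then show ?thesis by auto
  qed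
  have sub2: "\<forall>(w,S)\<in>set Ss. S \<subseteq> {..<n} \<and> set (\<sigma> S) = S"
    using subn sig by blast
  have srt: "\<forall>(w,S)\<in>set Ss. sorted_wrt (\<lambda>a b. alg_v J r x b \<le> alg_v J r x a) (\<sigma> S)"
    using subn sig by blast
  have v0: "\<forall>i<n. 0 \<le> alg_v J r x i" using v0[OF vi feas] by blast
  have main: "ck * (\<Sum>i<n. y i * pp i * alg_v J r x i) \<le> (\<Sum>(w,S)\<leftarrow>Ss. w * QQ k pp (alg_v J r x) (\<sigma> S) 0)"
    using TI[OF sub2 ind] v0 srt by blast
  have "(\<Sum>i<n. y i * pp i * alg_v J r x i) = lp_obj n J r x"
    unfolding lp_obj_def using apv[OF vi feas] by simp
  also have "\<dots> = lp_value n T k J r q" using lp_value_eq[OF opt] by simp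
  finally have L: "(\<Sum>i<n. y i * pp i * alg_v J r x i) = lp_value n T k J r q" .
  have "(\<Sum>(w,S)\<leftarrow>Ss. w * QQ k pp (alg_v J r x) (\<sigma> S) 0) = (\<Sum>(w,S)\<leftarrow>Ss. w * alg_proc k J r q x y (\<sigma> S) 0)"
  proof (intro arg_cong[where f=sum_list] map_cong refl, clarify)
    fix w S assume "(w, S) \<in> set Ss"
    then have "S \<subseteq> {i. i < n \<and> 0 < y i}" using sub by auto
    moreover then have "set (\<sigma> S) = S" using sig by auto
    ultimately show "w * QQ k pp (alg_v J r x) (\<sigma> S) 0 = w * alg_proc k J r q x y (\<sigma> S) 0"
      using proc_eq[OF vi feas, of "\<sigma> S" 0] by simp
  qed
  then show ?thesis using main L rew by simp
qed

lemma finFr: "finite Fr" unfolding Fr_def by simp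
lemma BBn: "BB \<subseteq> {..<n}" unfolding BB_def by auto
lemma finBB: "finite BB" unfolding BB_def by simp
lemma Fr_BB: "a \<in> Fr \<Longrightarrow> a \<notin> BB" unfolding Fr_def BB_def by auto

lemma Psum: "(\<Sum>i<n. if P i then y i * pp i else 0) =
   (\<Sum>i\<in>BB. if P i then pp i else 0) + (\<Sum>i\<in>Fr. if P i then y i * pp i else 0)"
proof -
  have "(\<Sum>i<n. if P i then y i * pp i else 0) = (\<Sum>i<n. (if i \<in> BB then (if P i then pp i else 0) else 0)
      + (if i \<in> Fr then (if P i then y i * pp i else 0) else 0))"
  proof (intro sum.cong refl)
    fix i assume "i \<in> {..<n}"
    then have i: "i < n" by simp
    then have "0 \<le> y i" "y i \<le> 1" using yfe[OF vi feas i] by auto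
    then show "(if P i then y i * pp i else 0) = (if i \<in> BB then (if P i then pp i else 0) else 0)
      + (if i \<in> Fr then (if P i then y i * pp i else 0) else 0)"
      using i unfolding BB_def Fr_def by (auto simp: alg_p_def)
  qed
  also have "\<dots> = (\<Sum>i\<in>{..<n} \<inter> BB. if P i then pp i else 0) + (\<Sum>i\<in>{..<n} \<inter> Fr. if P i then y i * pp i else 0)"
    by (simp add: sum.distrib sum.inter_restrict)
  also have "{..<n} \<inter> BB = BB" unfolding BB_def by auto
  also have "{..<n} \<inter> Fr = Fr" unfolding Fr_def by auto
  finally show ?thesis .
qed

lemma Psum_le: "(\<Sum>i<n. if P i then y i * pp i else 0) \<le> real k"
proof -
  have "(\<Sum>i<n. if P i then y i * pp i else 0) \<le> (\<Sum>i<n. y i * pp i)"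
    using yfe[OF vi feas] p01[OF vi feas] by (intro sum_mono) auto
  also have "\<dots> = (\<Sum>i<n. \<Sum>j<J. x i j)" using ap[OF vi feas] by simp
  also have "\<dots> \<le> real k" by (rule sumx[OF vi feas])
  finally show ?thesis .
qed

lemma L0_01: "\<forall>u\<in>set (map pp (filter P (\<sigma> BB))). 0 \<le> u \<and> u \<le> 1"
  using sig[OF BBn] BBn p01[OF vi feas] by auto

lemma L0_sum: "sum_list (map pp (filter P (\<sigma> BB))) = (\<Sum>i\<in>BB. if P i then pp i else 0)"
  using sig[OF BBn] by (intro sum_filter_list) auto


lemma algY_eq: "alg_Y n y = (if card Fr = 0 then return_pmf BB
     else if card Fr = 1 then
       map_pmf (\<lambda>b. if b then insert (Min Fr) BB else BB) (bernoulli_pmf (y (Min Fr)))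
     else if card Fr = 2 then
       map_pmf (\<lambda>b. if b then insert (Min Fr) BB else insert (Max Fr) BB) (bernoulli_pmf (y (Min Fr)))
     else return_pmf {})"
  unfolding alg_Y_def Let_def Fr_def BB_def ..

lemma BB_pos: "BB \<subseteq> {i. i < n \<and> 0 < y i}" unfolding BB_def by auto
lemma Fr_pos: "a \<in> Fr \<Longrightarrow> a < n \<and> 0 < y a \<and> y a < 1" unfolding Fr_def by auto

lemma ins_props: "a \<in> Fr \<Longrightarrow> distinct (\<sigma> (insert a BB)) \<and> set (\<sigma> (insert a BB)) = insert a BB"
  using sig[of "insert a BB"] Fr_pos[of a] BBn by auto

lemma BB_props: "distinct (\<sigma> BB) \<and> set (\<sigma> BB) = BB"
  using sig[OF BBn] by auto

lemma CC_ins: "a \<in> Fr \<Longrightarrow> CC k (map pp (filter P (\<sigma> (insert a BB)))) 0 =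
   CC k (map pp (filter P (\<sigma> BB))) 0 + (if P a then pp a else 0) * DD k (map pp (filter P (\<sigma> BB))) 0"
  using ins_props[of a] BB_props Fr_BB[of a] by (intro CC_insert) auto

lemma case0:
  assumes "card Fr = 0"
  shows "ck * lp_value n T k J r q \<le> alg_reward n k J r q x y \<sigma>"
proof -
  have Fe: "Fr = {}" using assms finFr by simp
  have rew: "alg_reward n k J r q x y \<sigma> = (\<Sum>(w,S)\<leftarrow>[(1, BB)]. w * alg_proc k J r q x y (\<sigma> S) 0)"
    unfolding alg_reward_def algY_eq using assms by simp
  show ?thesis
  proof (rule from_Ss[OF rew])
    show "\<forall>(w,S)\<in>set [(1::real, BB)]. S \<subseteq> {i. i < n \<and> 0 < y i}" using BB_pos by simp
    show "\<forall>P. ck * (\<Sum>i<n. if P i then y i * pp i else 0) \<le> (\<Sum>(w,S)\<leftarrow>[(1, BB)]. w * CC k (map pp (filter P (\<sigma> S))) 0)"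
    proof
      fix P
      have "ck * (0 + sum_list (map pp (filter P (\<sigma> BB)))) \<le> CC k (map pp (filter P (\<sigma> BB))) 0 + 0 * DD k (map pp (filter P (\<sigma> BB))) 0"
        using Psum_le[of P] Psum[of P] L0_sum[of P] Fe by (intro comb L0_01 kpos) auto
      then show "ck * (\<Sum>i<n. if P i then y i * pp i else 0) \<le> (\<Sum>(w,S)\<leftarrow>[(1, BB)]. w * CC k (map pp (filter P (\<sigma> S))) 0)"
        using Psum[of P] L0_sum[of P] Fe by simp
    qed
  qed
qed

lemma case1:
  assumes "card Fr = 1"
  shows "ck * lp_value n T k J r q \<le> alg_reward n k J r q x y \<sigma>"
proof -
  obtain a where Fe: "Fr = {a}" using assms by (meson card_1_singletonE)
  have aF: "a \<in> Fr" using Fe by simp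
  have ya: "0 < y a" "y a < 1" "a < n" using Fr_pos[OF aF] by auto
  have rew: "alg_reward n k J r q x y \<sigma> = (\<Sum>(w,S)\<leftarrow>[(y a, insert a BB), (1 - y a, BB)]. w * alg_proc k J r q x y (\<sigma> S) 0)"
    unfolding alg_reward_def algY_eq using assms Fe ya by (simp add: algebra_simps)
  show ?thesis
  proof (rule from_Ss[OF rew])
    show "\<forall>(w,S)\<in>set [(y a, insert a BB), (1 - y a, BB)]. S \<subseteq> {i. i < n \<and> 0 < y i}" using BB_pos ya by simp
    show "\<forall>P. ck * (\<Sum>i<n. if P i then y i * pp i else 0) \<le> (\<Sum>(w,S)\<leftarrow>[(y a, insert a BB), (1 - y a, BB)]. w * CC k (map pp (filter P (\<sigma> S))) 0)"
    proof
      fix P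
      define L0 where "L0 = map pp (filter P (\<sigma> BB))"
      define e1 where "e1 = (if P a then pp a else 0)"
      define u where "u = y a * e1"
      have e1: "0 \<le> e1" "e1 \<le> 1" using p01[OF vi feas ya(3)] unfolding e1_def by auto
      have u: "0 \<le> u" "u \<le> 1" unfolding u_def using e1 ya by (auto intro: mult_le_one)
      have ps: "(\<Sum>i<n. if P i then y i * pp i else 0) = u + sum_list L0"
        using Psum[of P] L0_sum[of P] Fe unfolding L0_def u_def e1_def by simp
      have c: "ck * (u + sum_list L0) \<le> CC k L0 0 + u * DD k L0 0"
        using Psum_le[of P] ps u L0_01[of P] kpos unfolding L0_def by (intro comb) auto
      have "(\<Sum>(w,S)\<leftarrow>[(y a, insert a BB), (1 - y a, BB)]. w * CC k (map pp (filter P (\<sigma> S))) 0)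
          = y a * (CC k L0 0 + e1 * DD k L0 0) + (1 - y a) * CC k L0 0"
        using CC_ins[OF aF, of P] unfolding L0_def e1_def by simp
      also have "\<dots> = CC k L0 0 + u * DD k L0 0" unfolding u_def by (simp add: algebra_simps)
      finally show "ck * (\<Sum>i<n. if P i then y i * pp i else 0) \<le> (\<Sum>(w,S)\<leftarrow>[(y a, insert a BB), (1 - y a, BB)]. w * CC k (map pp (filter P (\<sigma> S))) 0)"
        using c ps by simp
    qed
  qed
qed

lemma case2:
  assumes "card Fr = 2"
  shows "ck * lp_value n T k J r q \<le> alg_reward n k J r q x y \<sigma>"
proof -
  obtain a0 b0 where ab: "Fr = {a0, b0}" "a0 \<noteq> b0" using assms by (meson card_2_iff)
  define a where "a = Min Fr"
  define b where "b = Max Fr"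
  have Fe: "Fr = {a, b}" "a \<noteq> b" using ab unfolding a_def b_def by (auto simp: min_def max_def)
  have aF: "a \<in> Fr" and bF: "b \<in> Fr" using Fe by auto
  have ya: "0 < y a" "y a < 1" "a < n" using Fr_pos[OF aF] by auto
  have yb: "0 < y b" "y b < 1" "b < n" using Fr_pos[OF bF] by auto
  have sum1: "y a + y b = 1" using Fr_two[OF bfs _ Fe(2)] Fe(1) unfolding Fr_def by blast
  have rew: "alg_reward n k J r q x y \<sigma> = (\<Sum>(w,S)\<leftarrow>[(y a, insert a BB), (1 - y a, insert b BB)]. w * alg_proc k J r q x y (\<sigma> S) 0)"
    unfolding alg_reward_def algY_eq using assms ya unfolding a_def b_def by (simp add: algebra_simps)
  show ?thesis
  proof (rule from_Ss[OF rew])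
    show "\<forall>(w,S)\<in>set [(y a, insert a BB), (1 - y a, insert b BB)]. S \<subseteq> {i. i < n \<and> 0 < y i}" using BB_pos ya yb by simp
    show "\<forall>P. ck * (\<Sum>i<n. if P i then y i * pp i else 0) \<le> (\<Sum>(w,S)\<leftarrow>[(y a, insert a BB), (1 - y a, insert b BB)]. w * CC k (map pp (filter P (\<sigma> S))) 0)"
    proof
      fix P
      define L0 where "L0 = map pp (filter P (\<sigma> BB))"
      define e1 where "e1 = (if P a then pp a else 0)"
      define e2 where "e2 = (if P b then pp b else 0)"
      define u where "u = y a * e1 + (1 - y a) * e2"
      have e1: "0 \<le> e1" "e1 \<le> 1" using p01[OF vi feas ya(3)] unfolding e1_def by auto
      have e2: "0 \<le> e2" "e2 \<le> 1" using p01[OF vi feas yb(3)] unfolding e2_def by auto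
      have u: "0 \<le> u" "u \<le> 1"
      proof -
        have "y a * e1 \<le> y a" "(1 - y a) * e2 \<le> 1 - y a" using e1 e2 ya by (auto intro: mult_left_le)
        then show "u \<le> 1" unfolding u_def by simp
        show "0 \<le> u" unfolding u_def using e1 e2 ya by simp
      qed
      have ps: "(\<Sum>i<n. if P i then y i * pp i else 0) = u + sum_list L0"
      proof -
        have yb': "y b = 1 - y a" using sum1 by simp
        show ?thesis using Psum[of P] L0_sum[of P] Fe sum1 unfolding L0_def u_def e1_def e2_def
          by (simp add: algebra_simps, simp add: distrib_right[symmetric])
      qed
      have c: "ck * (u + sum_list L0) \<le> CC k L0 0 + u * DD k L0 0"
        using Psum_le[of P] ps u L0_01[of P] kpos unfolding L0_def by (intro comb) auto
      have "(\<Sum>(w,S)\<leftarrow>[(y a, insert a BB), (1 - y a, insert b BB)]. w * CC k (map pp (filter P (\<sigma> S))) 0)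
          = y a * (CC k L0 0 + e1 * DD k L0 0) + (1 - y a) * (CC k L0 0 + e2 * DD k L0 0)"
        using CC_ins[OF aF, of P] CC_ins[OF bF, of P] unfolding L0_def e1_def e2_def by simp
      also have "\<dots> = CC k L0 0 + u * DD k L0 0" unfolding u_def by (simp add: algebra_simps)
      finally show "ck * (\<Sum>i<n. if P i then y i * pp i else 0) \<le> (\<Sum>(w,S)\<leftarrow>[(y a, insert a BB), (1 - y a, insert b BB)]. w * CC k (map pp (filter P (\<sigma> S))) 0)"
        using c ps by simp
    qed
  qed
qed

lemma partB: "ck * lp_value n T k J r q \<le> alg_reward n k J r q x y \<sigma>"
proof -
  have "card Fr \<le> 2" using Fr_card[OF bfs] unfolding Fr_def .
  then have "card Fr = 0 \<or> card Fr = 1 \<or> card Fr = 2" by auto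
  then show ?thesis using case0 case1 case2 by blast
qed

lemma partA: "ck * opt_ptk n T k J r q \<le> ck * lp_value n T k J r q"
  using opt_le[OF vi opt] lp_value_eq[OF opt] ck_nonneg by (simp add: mult_left_mono)

end


theorem theorem4p1:
  fixes n T k J :: nat and r :: "nat \<Rightarrow> real" and q :: "nat \<Rightarrow> nat \<Rightarrow> real"
    and x :: "nat \<Rightarrow> nat \<Rightarrow> real" and y :: "nat \<Rightarrow> real" and \<sigma> :: "nat set \<Rightarrow> nat list"
  assumes "valid_instance n T k J r q"
    and "lp_optimal n T k J r q x y"
    and "lp_bfs n T k J q x y"
    and "alg_order_ok n (alg_v J r x) \<sigma>"
  shows "alg_reward n k J r q x y \<sigma> \<ge> (1 - exp (- real k) * real k ^ k / fact k) * lp_value n T k J r q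
       \<and> (1 - exp (- real k) * real k ^ k / fact k) * lp_value n T k J r q
           \<ge> (1 - exp (- real k) * real k ^ k / fact k) * opt_ptk n T k J r q"
proof -
  have A: "(1 - exp (- real k) * real k ^ k / fact k) * opt_ptk n T k J r q
      \<le> (1 - exp (- real k) * real k ^ k / fact k) * lp_value n T k J r q"
    by (rule partA[OF assms])
  have B: "(1 - exp (- real k) * real k ^ k / fact k) * lp_value n T k J r q \<le> alg_reward n k J r q x y \<sigma>"
    by (rule partB[OF assms])
  show ?thesis using A B by simp
qed

end
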